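(* There is a unique positive smooth function $\psi$ on $\mathbb{R}$ solving the Cauchy problem $L_0(\psi)=0$, $\psi(0)=1$, $\psi'(0)=0$. Moreover: (1) $\psi(-v)=\psi(v)>0$ for all $v\in\mathbb{R}$; (2) there exist a constant $v_0>0$ large enough and a unique function $R\in L^\infty([v_0,+\infty[)$ with $R(v)=O(|v|^{-2})$ such that $$\psi(v)=c|v|^{\gamma+1}\big(1+R(v)\big)\qquad\text{for all }|v|\geqslant v_0,$$ where $c$ is a positive constant.
   Context: Fix $\gamma>1/2$. Let $\tilde W(v)=\frac{\gamma(\gamma+1)}{1+v^2}$ for $v\in\mathbb{R}$ and let $L_0$ be the differential operator $L_0(\psi)=-\psi''+\tilde W\psi$ on $\mathbb{R}$. *)

theory Defs
  imports "HOL-Analysis.Analysis" "HOL-Library.Landau_Symbols"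
begin

definition Wt :: "real \<Rightarrow> real \<Rightarrow> real" where
  "Wt \<gamma> v = \<gamma> * (\<gamma> + 1) / (1 + v^2)"

definition L0 :: "real \<Rightarrow> (real \<Rightarrow> real) \<Rightarrow> real \<Rightarrow> real" where
  "L0 \<gamma> \<psi> v = - deriv (deriv \<psi>) v + Wt \<gamma> v * \<psi> v"

definition smooth_real :: "(real \<Rightarrow> real) \<Rightarrow> bool" where
  "smooth_real f \<longleftrightarrow> (\<exists>D :: nat \<Rightarrow> real \<Rightarrow> real. D 0 = f \<and>
      (\<forall>n x. (D n has_real_derivative D (Suc n) x) (at x)))"

end

theory Submission
  imports Defs "HOL-Computational_Algebra.Polynomial"
begin


lemma dpow: "((\<lambda>t::real. c * t ^ Suc m / real (Suc m)) has_real_derivative c * t ^ m) (at t)"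
  using DERIV_cdivide[OF DERIV_cmult[OF DERIV_pow[of "Suc m" t]], of c "real (Suc m)"]
  by (simp del: of_nat_Suc)

lemma dpowm: "((\<lambda>t::real. c * (-t) ^ Suc m / real (Suc m)) has_real_derivative - c * (-t) ^ m) (at t)"
  using DERIV_cdivide[OF DERIV_cmult[OF DERIV_chain2[OF DERIV_pow[of "Suc m" "-t"] DERIV_minus[OF DERIV_ident]]], of c "real (Suc m)"]
  by (simp del: of_nat_Suc)

lemma incr_lemma:
  fixes F F' :: "real \<Rightarrow> real"
  assumes "a \<le> b" "\<And>x. a \<le> x \<Longrightarrow> x \<le> b \<Longrightarrow> (F has_real_derivative F' x) (at x)"
    "\<And>x. a \<le> x \<Longrightarrow> x \<le> b \<Longrightarrow> F' x \<ge> 0"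
  shows "F a \<le> F b"
proof (rule DERIV_nonneg_imp_nondecreasing[OF assms(1)])
  fix x assume "a \<le> x" "x \<le> b"
  then show "\<exists>y. DERIV F x :> y \<and> y \<ge> 0" using assms(2,3) by blast
qed

lemma decr_lemma:
  fixes F F' :: "real \<Rightarrow> real"
  assumes "a \<le> b" "\<And>x. a \<le> x \<Longrightarrow> x \<le> b \<Longrightarrow> (F has_real_derivative F' x) (at x)"
    "\<And>x. a \<le> x \<Longrightarrow> x \<le> b \<Longrightarrow> F' x \<le> 0"
  shows "F a \<ge> F b"
proof (rule DERIV_nonpos_imp_nonincreasing[OF assms(1)])
  fix x assume "a \<le> x" "x \<le> b"
  then show "\<exists>y. DERIV F x :> y \<and> y \<le> 0" using assms(2,3) by blast
qed

lemma cmp_bound: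
  fixes F F' :: "real \<Rightarrow> real"
  assumes F0: "F 0 = 0" and dF: "\<And>x. (F has_real_derivative F' x) (at x)"
    and bd: "\<And>x. \<bar>F' x\<bar> \<le> c * \<bar>x\<bar> ^ m"
  shows "\<bar>F x\<bar> \<le> c * \<bar>x\<bar> ^ Suc m / Suc m"
proof (cases "x \<ge> 0")
  case True
  have 1: "(\<lambda>t. c * t ^ Suc m / Suc m - F t) 0 \<le> (\<lambda>t. c * t ^ Suc m / Suc m - F t) x"
    apply (rule incr_lemma[OF True, where F="\<lambda>t. c * t ^ Suc m / Suc m - F t" and F'="\<lambda>t. c * t ^ m - F' t"])
    subgoal for t by (rule DERIV_diff[OF dpow dF])
    subgoal for t using abs_le_D1[OF bd[of t]] abs_of_nonneg[of t] by simp
    done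
  have 2: "(\<lambda>t. c * t ^ Suc m / Suc m + F t) 0 \<le> (\<lambda>t. c * t ^ Suc m / Suc m + F t) x"
    apply (rule incr_lemma[OF True, where F="\<lambda>t. c * t ^ Suc m / Suc m + F t" and F'="\<lambda>t. c * t ^ m + F' t"])
    subgoal for t by (rule DERIV_add[OF dpow dF])
    subgoal for t using abs_le_D2[OF bd[of t]] abs_of_nonneg[of t] by simp
    done
  show ?thesis using 1 2 True F0 by (simp add: abs_le_iff)
next
  case False
  then have x: "x \<le> 0" by simp
  have 1: "(\<lambda>t. c * (-t) ^ Suc m / Suc m - F t) x \<ge> (\<lambda>t. c * (-t) ^ Suc m / Suc m - F t) 0"
    apply (rule decr_lemma[OF x, where F="\<lambda>t. c * (-t) ^ Suc m / Suc m - F t" and F'="\<lambda>t. - c * (-t) ^ m - F' t"])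
    subgoal for t by (rule DERIV_diff[OF dpowm dF])
    subgoal for t using abs_le_D2[OF bd[of t]] abs_of_nonpos[of t] by simp
    done
  have 2: "(\<lambda>t. c * (-t) ^ Suc m / Suc m + F t) x \<ge> (\<lambda>t. c * (-t) ^ Suc m / Suc m + F t) 0"
    apply (rule decr_lemma[OF x, where F="\<lambda>t. c * (-t) ^ Suc m / Suc m + F t" and F'="\<lambda>t. - c * (-t) ^ m + F' t"])
    subgoal for t by (rule DERIV_add[OF dpowm dF])
    subgoal for t using abs_le_D1[OF bd[of t]] abs_of_nonpos[of t] by simp
    done
  have "\<bar>x\<bar> = -x" using x by simp
  then show ?thesis using 1 2 x F0 by (simp add: abs_le_iff)
qed


lemma antideriv:
  fixes g :: "real \<Rightarrow> real"
  assumes "continuous_on UNIV g"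
  shows "\<exists>G. G 0 = 0 \<and> (\<forall>x. (G has_real_derivative g x) (at x))"
proof -
  have "\<exists>F. \<forall>x :: real. -\<infinity> < x \<longrightarrow> x < \<infinity> \<longrightarrow> (F has_vector_derivative g x) (at x)"
    by (rule einterval_antiderivative) (use assms in \<open>auto simp: continuous_on_eq_continuous_at\<close>)
  then obtain F where F: "\<And>x. (F has_vector_derivative g x) (at x)" by auto
  show ?thesis
    by (rule exI[of _ "\<lambda>x. F x - F 0"])
      (use F in \<open>auto intro!: derivative_eq_intros simp: has_real_derivative_iff_has_vector_derivative[symmetric]\<close>)
qed

definition antid :: "(real \<Rightarrow> real) \<Rightarrow> real \<Rightarrow> real" where
  "antid g = (SOME G. G 0 = 0 \<and> (\<forall>x. (G has_real_derivative g x) (at x)))"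

lemma antid:
  assumes "continuous_on UNIV g"
  shows "antid g 0 = 0" "\<And>x. (antid g has_real_derivative g x) (at x)"
proof -
  have "antid g 0 = 0 \<and> (\<forall>x. (antid g has_real_derivative g x) (at x))"
    unfolding antid_def by (rule someI_ex[OF antideriv[OF assms]])
  then show "antid g 0 = 0" "\<And>x. (antid g has_real_derivative g x) (at x)" by auto
qed

lemma deriv_cont:
  assumes "\<And>x. (F has_real_derivative F' x) (at x)"
  shows "continuous_on UNIV F"
  by (rule continuous_at_imp_continuous_on) (use assms DERIV_continuous in blast)

lemma sign1:
  fixes F F' :: "real \<Rightarrow> real"
  assumes F0: "F 0 = 0" and dF: "\<And>x. (F has_real_derivative F' x) (at x)"
    and s: "\<And>x. x * F' x \<ge> 0"
  shows "F x \<ge> 0"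
proof -
  consider "x > 0" | "x = 0" | "x < 0" by linarith
  then show ?thesis
  proof cases
    case 1
    from MVT2[OF 1, of F F'] dF obtain z where z: "0 < z" "z < x" "F x - F 0 = (x - 0) * F' z" by blast
    have "F' z \<ge> 0" using s[of z] z by (simp add: zero_le_mult_iff)
    then show ?thesis using z 1 F0 by simp
  next
    case 2 then show ?thesis using F0 by simp
  next
    case 3
    from MVT2[OF 3, of F F'] dF obtain z where z: "x < z" "z < 0" "F 0 - F x = (0 - x) * F' z" by blast
    have "F' z \<le> 0" using s[of z] z by (simp add: zero_le_mult_iff)
    have "x * F' z \<ge> 0" by (rule mult_nonpos_nonpos) (use 3 \<open>F' z \<le> 0\<close> in auto)
    then show ?thesis using z F0 by simp
  qed
qed

lemma sign2:
  fixes F F' :: "real \<Rightarrow> real"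
  assumes F0: "F 0 = 0" and dF: "\<And>x. (F has_real_derivative F' x) (at x)"
    and s: "\<And>x. F' x \<ge> 0"
  shows "x * F x \<ge> 0"
proof -
  consider "x > 0" | "x = 0" | "x < 0" by linarith
  then show ?thesis
  proof cases
    case 1
    from MVT2[OF 1, of F F'] dF obtain z where z: "0 < z" "z < x" "F x - F 0 = (x - 0) * F' z" by blast
    then show ?thesis using 1 F0 s[of z] by simp
  next
    case 2 then show ?thesis by simp
  next
    case 3
    from MVT2[OF 3, of F F'] dF obtain z where z: "x < z" "z < 0" "F 0 - F x = (0 - x) * F' z" by blast
    have "x * F' z \<le> 0" by (rule mult_nonpos_nonneg) (use 3 s[of z] in auto)
    then have "F x \<le> 0" using z F0 by simp
    then show ?thesis using 3 by (simp add: mult_nonpos_nonpos)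
  qed
qed


lemma onepx2_pos: "1 + (x::real)^2 > 0"
  by (simp add: add_pos_nonneg)

lemma onepx2_ne: "1 + (x::real)^2 \<noteq> 0"
  using onepx2_pos[of x] by linarith

lemma Wt_cont: "continuous_on UNIV (Wt \<gamma>)"
  unfolding Wt_def[abs_def]
  by (intro continuous_intros) (use onepx2_ne in auto)

lemma Wt_nonneg: "\<gamma> > 0 \<Longrightarrow> Wt \<gamma> x \<ge> 0"
  unfolding Wt_def by (intro divide_nonneg_pos) (use onepx2_pos in auto)

lemma Wt_le: "\<gamma> > 0 \<Longrightarrow> Wt \<gamma> x \<le> \<gamma> * (\<gamma> + 1)"
proof -
  assume g: "\<gamma> > 0"
  have "\<gamma> * (\<gamma> + 1) / (1 + x^2) \<le> \<gamma> * (\<gamma> + 1) / 1"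
    by (rule divide_left_mono) (use g onepx2_pos[of x] in auto)
  then show ?thesis by (simp add: Wt_def)
qed

lemma Wt_even: "Wt \<gamma> (-x) = Wt \<gamma> x"
  unfolding Wt_def by simp

primrec pic :: "real \<Rightarrow> nat \<Rightarrow> (real \<Rightarrow> real) \<times> (real \<Rightarrow> real)" where
  "pic \<gamma> 0 = (\<lambda>_. 1, \<lambda>_. 0)"
| "pic \<gamma> (Suc n) = (antid (antid (\<lambda>x. Wt \<gamma> x * fst (pic \<gamma> n) x)),
                      antid (\<lambda>x. Wt \<gamma> x * fst (pic \<gamma> n) x))"

definition pu where "pu \<gamma> n = fst (pic \<gamma> n)"
definition pu1 where "pu1 \<gamma> n = snd (pic \<gamma> n)"
definition pu2 where "pu2 \<gamma> n x = (if n = 0 then 0 else Wt \<gamma> x * pu \<gamma> (n - 1) x)"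

lemma pic_props:
  "(\<forall>x. (pu \<gamma> n has_real_derivative pu1 \<gamma> n x) (at x)) \<and>
   (\<forall>x. (pu1 \<gamma> n has_real_derivative pu2 \<gamma> n x) (at x)) \<and>
   pu \<gamma> n 0 = (if n = 0 then 1 else 0) \<and> pu1 \<gamma> n 0 = 0"
proof (induction n)
  case 0
  then show ?case by (simp add: pu_def pu1_def pu2_def)
next
  case (Suc n)
  define g where "g = (\<lambda>x. Wt \<gamma> x * pu \<gamma> n x)"
  have cg: "continuous_on UNIV g"
    unfolding g_def using Suc.IH deriv_cont[of "pu \<gamma> n"]
    by (intro continuous_on_mult Wt_cont) blast
  note a1 = antid[OF cg]
  note a2 = antid[OF deriv_cont[OF a1(2)]]
  have e1: "pu \<gamma> (Suc n) = antid (antid g)" "pu1 \<gamma> (Suc n) = antid g"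
    by (simp_all add: pu_def pu1_def g_def)
  have e2: "pu2 \<gamma> (Suc n) = g" by (simp add: pu2_def g_def fun_eq_iff)
  show ?case unfolding e1 e2 using a1 a2 by simp
qed

lemma pu_d: "(pu \<gamma> n has_real_derivative pu1 \<gamma> n x) (at x)"
  using pic_props by blast
lemma pu1_d: "(pu1 \<gamma> n has_real_derivative pu2 \<gamma> n x) (at x)"
  using pic_props by blast
lemma pu_0: "pu \<gamma> n 0 = (if n = 0 then 1 else 0)"
  using pic_props by blast
lemma pu1_0: "pu1 \<gamma> n 0 = 0"
  using pic_props by blast

lemma pu_pos:
  assumes "\<gamma> > 0"
  shows "pu \<gamma> n x \<ge> 0 \<and> x * pu1 \<gamma> n x \<ge> 0"
proof (induction n arbitrary: x)
  case 0
  then show ?case by (simp add: pu_def pu1_def)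
next
  case (Suc n)
  have a: "y * pu1 \<gamma> (Suc n) y \<ge> 0" for y
    by (rule sign2[OF pu1_0 pu1_d]) (use Suc.IH Wt_nonneg[OF assms] in \<open>auto simp: pu2_def\<close>)
  have b: "pu \<gamma> (Suc n) x \<ge> 0"
    by (rule sign1[OF _ pu_d]) (use a pu_0 in auto)
  show ?case using a b by blast
qed


lemma pu_bound:
  assumes g: "\<gamma> > 0"
  defines "k \<equiv> \<gamma> * (\<gamma> + 1)"
  shows "(\<forall>x. \<bar>pu \<gamma> n x\<bar> \<le> k ^ n * \<bar>x\<bar> ^ (2 * n) / fact n) \<and>
         (\<forall>x. \<bar>pu1 \<gamma> (Suc n) x\<bar> \<le> k ^ Suc n * \<bar>x\<bar> ^ (2 * n + 1) / fact n)"
proof (induction n)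
  have k0: "k \<ge> 0" using g by (simp add: k_def)
  {
    case 0
    have a: "\<bar>pu \<gamma> 0 x\<bar> \<le> 1" for x by (simp add: pu_def)
    have "\<bar>pu1 \<gamma> 1 x\<bar> \<le> k * \<bar>x\<bar> ^ Suc 0 / Suc 0" for x
    proof (rule cmp_bound[OF pu1_0 pu1_d])
      fix y
      show "\<bar>pu2 \<gamma> 1 y\<bar> \<le> k * \<bar>y\<bar> ^ 0"
        using Wt_nonneg[OF g, of y] Wt_le[OF g, of y] by (simp add: pu2_def pu_def k_def)
    qed
    then show ?case using a by simp
  next
    case (Suc n)
    have b1: "\<bar>pu \<gamma> (Suc n) x\<bar> \<le> k ^ Suc n * \<bar>x\<bar> ^ (2 * Suc n) / fact (Suc n)" for x
    proof -
      have "\<bar>pu \<gamma> (Suc n) x\<bar> \<le> (k ^ Suc n / fact n) * \<bar>x\<bar> ^ Suc (2 * n + 1) / Suc (2 * n + 1)"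
        by (rule cmp_bound[OF _ pu_d]) (use Suc.IH pu_0 in auto)
      also have "\<dots> \<le> k ^ Suc n * \<bar>x\<bar> ^ (2 * Suc n) / fact (Suc n)"
      proof -
        have "(k ^ Suc n / fact n) * \<bar>x\<bar> ^ Suc (2 * n + 1) / Suc (2 * n + 1)
             = (k ^ Suc n * \<bar>x\<bar> ^ (2 * Suc n)) / (fact n * (2 * n + 2))"
          by (simp add: field_simps)
        also have "\<dots> \<le> (k ^ Suc n * \<bar>x\<bar> ^ (2 * Suc n)) / (fact n * (n + 1))"
          by (intro divide_left_mono mult_pos_pos) (use k0 in \<open>auto intro!: add_pos_nonneg\<close>)
        also have "\<dots> = k ^ Suc n * \<bar>x\<bar> ^ (2 * Suc n) / fact (Suc n)"
          by (simp add: algebra_simps)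
        finally show ?thesis .
      qed
      finally show ?thesis .
    qed
    have b2: "\<bar>pu1 \<gamma> (Suc (Suc n)) x\<bar> \<le> k ^ Suc (Suc n) * \<bar>x\<bar> ^ (2 * Suc n + 1) / fact (Suc n)" for x
    proof -
      have "\<bar>pu1 \<gamma> (Suc (Suc n)) x\<bar> \<le> (k ^ Suc (Suc n) / fact (Suc n)) * \<bar>x\<bar> ^ Suc (2 * Suc n) / Suc (2 * Suc n)"
      proof (rule cmp_bound[OF pu1_0 pu1_d])
        fix y
        have "\<bar>pu2 \<gamma> (Suc (Suc n)) y\<bar> = Wt \<gamma> y * \<bar>pu \<gamma> (Suc n) y\<bar>"
          using Wt_nonneg[OF g, of y] by (simp add: pu2_def abs_mult)
        also have "\<dots> \<le> k * (k ^ Suc n * \<bar>y\<bar> ^ (2 * Suc n) / fact (Suc n))"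
          by (rule mult_mono) (use Wt_le[OF g, of y] Wt_nonneg[OF g, of y] b1 k0 in \<open>auto simp: k_def\<close>)
        finally show "\<bar>pu2 \<gamma> (Suc (Suc n)) y\<bar> \<le> (k ^ Suc (Suc n) / fact (Suc n)) * \<bar>y\<bar> ^ (2 * Suc n)"
          by simp
      qed
      also have "\<dots> \<le> (k ^ Suc (Suc n) / fact (Suc n)) * \<bar>x\<bar> ^ Suc (2 * Suc n) / 1"
        by (rule divide_left_mono) (use k0 in auto)
      finally show ?thesis by simp
    qed
    show ?case using b1 b2 by blast
  }
qed


definition psi where "psi \<gamma> x = (\<Sum>n. pu \<gamma> n x)"
definition psi1 where "psi1 \<gamma> x = (\<Sum>n. pu1 \<gamma> n x)"

lemma summ_M0: "summable (\<lambda>n. (a::real) ^ n / fact n)"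
  using summable_exp[of a] by (simp add: field_simps)

lemma summ_M1: "summable (\<lambda>n. b * (a::real) ^ (n - 1) / fact (n - 1))"
proof -
  have "summable (\<lambda>n. b * (a ^ n / fact n))" by (intro summable_mult summ_M0)
  then have "summable (\<lambda>n. b * a ^ (Suc n - 1) / fact (Suc n - 1))" by simp
  then show ?thesis by (subst (asm) summable_Suc_iff)
qed

lemma series_main:
  assumes g: "\<gamma> > 0"
  shows "summable (\<lambda>n. pu \<gamma> n x)" "summable (\<lambda>n. pu1 \<gamma> n x)"
    "(psi \<gamma> has_real_derivative psi1 \<gamma> x) (at x)"
    "(psi1 \<gamma> has_real_derivative Wt \<gamma> x * psi \<gamma> x) (at x)"
proof -
  define k where "k = \<gamma> * (\<gamma> + 1)"
  have k0: "k \<ge> 0" using g by (simp add: k_def)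
  define T where "T = \<bar>x\<bar> + 1"
  have T0: "T > 0" by (simp add: T_def add_nonneg_pos)
  define S where "S = ball (0::real) T"
  have xS: "x \<in> S" "x \<in> interior S" "0 \<in> S" using T0 by (auto simp: S_def T_def)
  have cS: "convex S" by (simp add: S_def)
  have yT: "\<bar>y\<bar> \<le> T" if "y \<in> S" for y using that by (simp add: S_def)
  note B = pu_bound[OF g, folded k_def]
  have b0: "\<bar>pu \<gamma> n y\<bar> \<le> (k * T^2) ^ n / fact n" if "y \<in> S" for n y
  proof -
    have "\<bar>pu \<gamma> n y\<bar> \<le> k ^ n * \<bar>y\<bar> ^ (2 * n) / fact n" using B by blast
    also have "\<dots> \<le> k ^ n * T ^ (2 * n) / fact n"
      by (intro divide_right_mono mult_left_mono power_mono) (use yT[OF that] k0 in auto)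
    finally show ?thesis by (simp add: power_mult power_mult_distrib)
  qed
  have b1: "\<bar>pu1 \<gamma> n y\<bar> \<le> k * T * (k * T^2) ^ (n - 1) / fact (n - 1)" if "y \<in> S" for n y
  proof (cases n)
    case 0
    then show ?thesis using k0 T0 by (simp add: pu1_def)
  next
    case (Suc m)
    have "\<bar>pu1 \<gamma> (Suc m) y\<bar> \<le> k ^ Suc m * \<bar>y\<bar> ^ (2 * m + 1) / fact m" using B by blast
    also have "\<dots> \<le> k ^ Suc m * T ^ (2 * m + 1) / fact m"
      by (intro divide_right_mono mult_left_mono power_mono) (use yT[OF that] k0 in auto)
    moreover have "(T ^ m)^2 = (T^2)^m" by (metis power_mult mult.commute)
    ultimately show ?thesis using Suc by (simp add: power_mult power_mult_distrib field_simps)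
  qed
  have b2: "\<bar>pu2 \<gamma> n y\<bar> \<le> k * (k * T^2) ^ (n - 1) / fact (n - 1)" if "y \<in> S" for n y
  proof (cases n)
    case 0
    then show ?thesis using k0 T0 by (simp add: pu2_def)
  next
    case (Suc m)
    have "\<bar>pu2 \<gamma> (Suc m) y\<bar> = Wt \<gamma> y * \<bar>pu \<gamma> m y\<bar>"
      using Wt_nonneg[OF g, of y] by (simp add: pu2_def abs_mult)
    also have "\<dots> \<le> k * ((k * T^2) ^ m / fact m)"
      by (rule mult_mono) (use Wt_le[OF g, of y] b0[OF that] k0 in \<open>auto simp: k_def\<close>)
    finally show ?thesis using Suc by simp
  qed
  have uc1: "uniformly_convergent_on S (\<lambda>n x. \<Sum>i<n. pu1 \<gamma> i x)"
    by (rule Weierstrass_m_test'[OF _ summ_M1]) (use b1 in auto)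
  have uc2: "uniformly_convergent_on S (\<lambda>n x. \<Sum>i<n. pu2 \<gamma> i x)"
    by (rule Weierstrass_m_test'[OF _ summ_M1]) (use b2 in auto)
  have s0: "summable (\<lambda>n. pu \<gamma> n 0)"
    by (rule summable_comparison_test[OF _ summ_M0]) (use b0[OF xS(3)] in auto)
  have s1: "summable (\<lambda>n. pu1 \<gamma> n 0)"
    by (rule summable_comparison_test[OF _ summ_M1]) (use b1[OF xS(3)] in auto)
  have d1: "(pu \<gamma> n has_field_derivative pu1 \<gamma> n y) (at y within S)" for n y
    using pu_d has_field_derivative_at_within by blast
  have d2: "(pu1 \<gamma> n has_field_derivative pu2 \<gamma> n y) (at y within S)" for n y
    using pu1_d has_field_derivative_at_within by blast
  note r1 = has_field_derivative_series'[OF cS d1 uc1 xS(3) s0 xS(2)]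
  note r2 = has_field_derivative_series'[OF cS d2 uc2 xS(3) s1 xS(2)]
  show sm: "summable (\<lambda>n. pu \<gamma> n x)" "summable (\<lambda>n. pu1 \<gamma> n x)" using r1 r2 by auto
  have e1: "psi \<gamma> = (\<lambda>x. \<Sum>n. pu \<gamma> n x)" "psi1 \<gamma> = (\<lambda>x. \<Sum>n. pu1 \<gamma> n x)"
    by (simp_all add: psi_def[abs_def] psi1_def[abs_def])
  show "(psi \<gamma> has_real_derivative psi1 \<gamma> x) (at x)"
    using r1(2) by (simp add: e1 psi1_def)
  have "(\<lambda>n. pu2 \<gamma> (Suc n) x) sums (Wt \<gamma> x * psi \<gamma> x)"
    unfolding pu2_def psi_def using sums_mult[OF summable_sums[OF sm(1)]] by simp
  then have "(\<lambda>n. pu2 \<gamma> n x) sums (Wt \<gamma> x * psi \<gamma> x)"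
    by (subst (asm) sums_Suc_iff) (simp add: pu2_def)
  then have "(\<Sum>n. pu2 \<gamma> n x) = Wt \<gamma> x * psi \<gamma> x" by (rule sums_unique[symmetric])
  then show "(psi1 \<gamma> has_real_derivative Wt \<gamma> x * psi \<gamma> x) (at x)"
    using r2(2) by (simp add: e1)
qed


lemma psi_0: "\<gamma> > 0 \<Longrightarrow> psi \<gamma> 0 = 1"
proof -
  have "(\<lambda>n. pu \<gamma> n 0) = (\<lambda>n. if n = 0 then (\<lambda>_. 1) n else 0)" by (simp add: pu_0 fun_eq_iff)
  moreover have "(\<lambda>n. if n = 0 then (\<lambda>_. 1::real) n else 0) sums 1" by (rule sums_single)
  ultimately show ?thesis by (simp add: psi_def sums_iff)
qed

lemma psi1_0: "psi1 \<gamma> 0 = 0"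
  by (simp add: psi1_def pu1_0)

lemma psi_ge1:
  assumes g: "\<gamma> > 0"
  shows "psi \<gamma> x \<ge> 1"
proof -
  have "sum (\<lambda>n. pu \<gamma> n x) {..<1} \<le> (\<Sum>n. pu \<gamma> n x)"
    by (rule sum_le_suminf[OF series_main(1)[OF g]]) (use pu_pos[OF g] in auto)
  then show ?thesis by (simp add: psi_def pu_def)
qed

definition wp :: "real poly" where "wp = [:1, 0, 1:]"

primrec trip :: "real \<Rightarrow> nat \<Rightarrow> real poly \<times> real poly \<times> nat" where
  "trip \<gamma> 0 = (1, 0, 0)"
| "trip \<gamma> (Suc n) = (case trip \<gamma> n of (p, q, m) \<Rightarrow>
     (pderiv p * wp + smult (\<gamma> * (\<gamma> + 1)) q - smult (2 * real m) ([:0, 1:] * p),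
      (p + pderiv q) * wp - smult (2 * real m) ([:0, 1:] * q), Suc m))"

definition ev :: "(real \<Rightarrow> real) \<Rightarrow> (real \<Rightarrow> real) \<Rightarrow> real poly \<times> real poly \<times> nat \<Rightarrow> real \<Rightarrow> real" where
  "ev f f1 t x = (case t of (p, q, m) \<Rightarrow> (poly p x * f x + poly q x * f1 x) / (1 + x^2) ^ m)"

lemma poly_wp: "poly wp x = 1 + x^2"
  by (simp add: wp_def power2_eq_square)

lemma ev_step:
  assumes d1: "\<And>x. (f has_real_derivative f1 x) (at x)"
    and d2: "\<And>x. (f1 has_real_derivative Wt \<gamma> x * f x) (at x)"
  shows "(ev f f1 (trip \<gamma> n) has_real_derivative ev f f1 (trip \<gamma> (Suc n)) x) (at x)"
proof -
  obtain p q m where t: "trip \<gamma> n = (p, q, m)" by (metis prod_cases3)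
  have e: "ev f f1 (trip \<gamma> n) = (\<lambda>x. (poly p x * f x + poly q x * f1 x) / (1 + x^2) ^ m)"
    by (simp add: ev_def t fun_eq_iff)
  have w: "(1 + x^2) \<noteq> 0" by (rule onepx2_ne)
  have w': "(1 + x * x) \<noteq> 0" using w by (simp add: power2_eq_square)
  show ?thesis unfolding e
    apply (rule derivative_eq_intros refl poly_DERIV d1 d2 | simp add: w)+
    apply (simp add: t ev_def poly_wp Wt_def)
    apply (cases m)
     apply (simp add: field_simps power2_eq_square w')
    apply (simp add: divide_simps power2_eq_square w')
    apply (simp add: algebra_simps)
    done
qed


lemma smooth_sol:
  assumes d1: "\<And>x. (f has_real_derivative f1 x) (at x)"
    and d2: "\<And>x. (f1 has_real_derivative Wt \<gamma> x * f x) (at x)"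
  shows "smooth_real f"
  unfolding smooth_real_def
proof (intro exI conjI allI)
  show "(\<lambda>n. ev f f1 (trip \<gamma> n)) 0 = f" by (simp add: ev_def fun_eq_iff)
  fix n x
  show "((\<lambda>n. ev f f1 (trip \<gamma> n)) n has_real_derivative (\<lambda>n. ev f f1 (trip \<gamma> n)) (Suc n) x) (at x)"
    using ev_step[OF d1 d2] by simp
qed

lemma energy_zero:
  assumes g: "\<gamma> > 0"
    and d1: "\<And>x. (d has_real_derivative dq x) (at x)"
    and d2: "\<And>x. (dq has_real_derivative Wt \<gamma> x * d x) (at x)"
    and i0: "d 0 = 0" "dq 0 = 0"
  shows "d x = 0"
proof -
  define k where "k = \<gamma> * (\<gamma> + 1)"
  define L where "L = 1 + k"
  have k0: "k \<ge> 0" using g by (simp add: k_def)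
  define E where "E = (\<lambda>t. (d t)^2 + (dq t)^2)"
  define E' where "E' = (\<lambda>t. 2 * d t * dq t + 2 * dq t * (Wt \<gamma> t * d t))"
  have dE: "(E has_real_derivative E' t) (at t)" for t
    unfolding E_def E'_def
    by (rule derivative_eq_intros refl d1 d2 | simp)+
  have E0: "E 0 = 0" by (simp add: E_def i0)
  have Enn: "E t \<ge> 0" for t by (simp add: E_def)
  have bE: "\<bar>E' t\<bar> \<le> L * E t" for t
  proof -
    have a: "\<bar>2 * d t * dq t\<bar> \<le> (d t)^2 + (dq t)^2"
      using sum_squares_bound[of "d t" "dq t"] abs_le_square_iff
      by (smt (verit, best) power2_eq_square sum_power2_ge_zero zero_le_power2 power2_diff power2_sum)
    have b: "\<bar>2 * dq t * (Wt \<gamma> t * d t)\<bar> = Wt \<gamma> t * \<bar>2 * d t * dq t\<bar>"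
      using Wt_nonneg[OF g, of t] by (simp add: abs_mult)
    have c: "Wt \<gamma> t * \<bar>2 * d t * dq t\<bar> \<le> k * ((d t)^2 + (dq t)^2)"
      by (rule mult_mono) (use Wt_le[OF g, of t] a k0 in \<open>auto simp: k_def\<close>)
    show ?thesis unfolding E'_def E_def L_def using a b c by (simp add: algebra_simps)
  qed
  have "E x \<le> 0"
  proof (cases "x \<ge> 0")
    case True
    have "(\<lambda>t. E t * exp (- L * t)) x \<le> (\<lambda>t. E t * exp (- L * t)) 0"
    proof (rule decr_lemma[OF True, where F="\<lambda>t. E t * exp (- L * t)" and F'="\<lambda>t. (E' t - L * E t) * exp (- L * t)"])
      fix t
      show "((\<lambda>t. E t * exp (- L * t)) has_real_derivative (E' t - L * E t) * exp (- L * t)) (at t)"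
        by (rule derivative_eq_intros refl dE | simp add: algebra_simps)+
      show "(E' t - L * E t) * exp (- L * t) \<le> 0"
        using bE[of t] by (intro mult_nonpos_nonneg) (auto simp: abs_le_iff)
    qed
    then show ?thesis using E0 by (simp add: zero_le_mult_iff) (smt (verit) exp_gt_zero mult_pos_pos Enn)
  next
    case False
    then have x: "x \<le> 0" by simp
    have "(\<lambda>t. E t * exp (L * t)) x \<le> (\<lambda>t. E t * exp (L * t)) 0"
    proof (rule incr_lemma[OF x, where F="\<lambda>t. E t * exp (L * t)" and F'="\<lambda>t. (E' t + L * E t) * exp (L * t)"])
      fix t
      show "((\<lambda>t. E t * exp (L * t)) has_real_derivative (E' t + L * E t) * exp (L * t)) (at t)"
        by (rule derivative_eq_intros refl dE | simp add: algebra_simps)+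
      show "(E' t + L * E t) * exp (L * t) \<ge> 0"
        using bE[of t] by (intro mult_nonneg_nonneg) (auto simp: abs_le_iff)
    qed
    then show ?thesis using E0 by (simp add: zero_le_mult_iff) (smt (verit) exp_gt_zero mult_pos_pos Enn)
  qed
  then have "E x = 0" using Enn[of x] by simp
  then show ?thesis by (simp add: E_def)
qed


lemma phi_of_Phi:
  assumes d1: "\<And>w. w > 0 \<Longrightarrow> (Phi has_real_derivative Phd w) (at w)"
    and d2: "\<And>w. w > 0 \<Longrightarrow> (Phd has_real_derivative Phdd w) (at w)"
  shows "((\<lambda>v. Phi (1 + v^2)) has_real_derivative 2 * v * Phd (1 + v^2)) (at v)"
    "((\<lambda>v. 2 * v * Phd (1 + v^2)) has_real_derivative 2 * Phd (1 + v^2) + 4 * v^2 * Phdd (1 + v^2)) (at v)"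
proof -
  have w: "1 + v^2 > 0" by (rule onepx2_pos)
  have g: "((\<lambda>v::real. 1 + v^2) has_real_derivative 2 * v) (at v)"
    by (auto intro!: derivative_eq_intros)
  show "((\<lambda>v. Phi (1 + v^2)) has_real_derivative 2 * v * Phd (1 + v^2)) (at v)"
    using DERIV_chain2[OF d1[OF w] g] by (simp add: mult.commute)
  have "((\<lambda>v. Phd (1 + v^2)) has_real_derivative Phdd (1 + v^2) * (2 * v)) (at v)"
    using DERIV_chain2[OF d2[OF w] g] by simp
  then have "((\<lambda>v. 2 * v * Phd (1 + v^2)) has_real_derivative (2 * 1) * Phd (1 + v^2) + (Phdd (1 + v^2) * (2 * v)) * (2 * v)) (at v)"
    by (intro DERIV_mult DERIV_cmult DERIV_ident)
  then show "((\<lambda>v. 2 * v * Phd (1 + v^2)) has_real_derivative 2 * Phd (1 + v^2) + 4 * v^2 * Phdd (1 + v^2)) (at v)"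
    by (simp add: power2_eq_square algebra_simps)
qed

lemma wron_gen:
  assumes dpsi: "\<And>x. (psz has_real_derivative psd x) (at x)"
    and dpsi1: "\<And>x. (psd has_real_derivative Wt \<gamma> x * psz x) (at x)"
    and ppos: "\<And>x. x \<ge> 0 \<Longrightarrow> psz x \<ge> 0" and p10: "psd 0 = 0"
    and dphi: "\<And>x. (phi has_real_derivative phd x) (at x)"
    and dphi1: "\<And>x. (phd has_real_derivative phdd x) (at x)"
    and phipos: "\<And>x. x \<ge> 0 \<Longrightarrow> phi x > 0" and ph10: "phd 0 = 0"
    and sub: "\<And>x. x \<ge> 0 \<Longrightarrow> s * (Wt \<gamma> x * phi x - phdd x) \<ge> 0"
    and v: "v \<ge> 0"
  shows "s * (psz v / phi v) \<ge> s * (psz 0 / phi 0)"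
proof -
  define Wr where "Wr = (\<lambda>t. psd t * phi t - psz t * phd t)"
  have dW: "((\<lambda>t. s * Wr t) has_real_derivative s * (psz t * (Wt \<gamma> t * phi t - phdd t))) (at t)" for t
  proof -
    have "((\<lambda>t. s * Wr t) has_real_derivative s * ((Wt \<gamma> t * psz t * phi t + phd t * psd t) - (psd t * phd t + phdd t * psz t))) (at t)"
      unfolding Wr_def by (intro DERIV_cmult DERIV_diff DERIV_mult dpsi dpsi1 dphi dphi1)
    then show ?thesis by (simp add: algebra_simps)
  qed
  have Wr0: "Wr 0 = 0" by (simp add: Wr_def p10 ph10)
  have Wnn: "s * Wr t \<ge> 0" if t: "t \<ge> 0" for t
  proof -
    have "(\<lambda>t. s * Wr t) 0 \<le> (\<lambda>t. s * Wr t) t"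
    proof (rule incr_lemma[OF t, where F="\<lambda>t. s * Wr t" and F'="\<lambda>t. s * (psz t * (Wt \<gamma> t * phi t - phdd t))"])
      fix y assume y: "0 \<le> y" "y \<le> t"
      show "((\<lambda>t. s * Wr t) has_real_derivative s * (psz y * (Wt \<gamma> y * phi y - phdd y))) (at y)" by (rule dW)
      have "s * (psz y * (Wt \<gamma> y * phi y - phdd y)) = psz y * (s * (Wt \<gamma> y * phi y - phdd y))" by simp
      also have "\<dots> \<ge> 0" using ppos[of y] sub[of y] y by simp
      finally show "0 \<le> s * (psz y * (Wt \<gamma> y * phi y - phdd y))" .
    qed
    then show ?thesis using Wr0 by simp
  qed
  have "(\<lambda>t. s * (psz t / phi t)) 0 \<le> (\<lambda>t. s * (psz t / phi t)) v"
  proof (rule incr_lemma[OF v, where F="\<lambda>t. s * (psz t / phi t)" and F'="\<lambda>t. s * Wr t / (phi t)^2"])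
    fix y assume y: "0 \<le> y" "y \<le> v"
    have p: "phi y \<noteq> 0" using phipos[of y] y by simp
    have "((\<lambda>t. s * (psz t / phi t)) has_real_derivative s * ((psd y * phi y - psz y * phd y) / (phi y * phi y))) (at y)"
      by (intro DERIV_cmult DERIV_divide dpsi dphi p)
    then show "((\<lambda>t. s * (psz t / phi t)) has_real_derivative s * Wr y / (phi y)^2) (at y)"
      by (simp add: Wr_def power2_eq_square)
    show "s * Wr y / (phi y)^2 \<ge> 0" using Wnn[of y] y by simp
  qed
  then show ?thesis by simp
qed



lemma dpowr: "w > 0 \<Longrightarrow> ((\<lambda>w. w powr r) has_real_derivative r * (w powr r) / w) (at w)"
  using has_real_derivative_powr[of w r] by (simp add: powr_diff)

lemma dsq: "((\<lambda>w::real. w^2) has_real_derivative 2 * w) (at w)"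
  by (auto intro!: derivative_eq_intros)

lemma PhiA_d:
  assumes w: "w > 0"
  shows "((\<lambda>w. w powr r) has_real_derivative r * w powr r / w) (at w)"
    "((\<lambda>w. r * w powr r / w) has_real_derivative r * (r - 1) * w powr r / w^2) (at w)"
proof -
  have wn: "w \<noteq> 0" "w^2 \<noteq> 0" "w * w \<noteq> 0" using w by auto
  show "((\<lambda>w. w powr r) has_real_derivative r * w powr r / w) (at w)" by (rule dpowr[OF w])
  show "((\<lambda>w. r * w powr r / w) has_real_derivative r * (r - 1) * w powr r / w^2) (at w)"
    apply (rule DERIV_cong)
     apply (rule DERIV_add DERIV_cmult DERIV_divide dpowr DERIV_ident dsq DERIV_const w wn)+
    using w apply (simp add: field_simps power2_eq_square)
    done
qed

lemma PhiB_d: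
  assumes w: "w > 0"
  shows "((\<lambda>w. w powr r + a * w powr r / w) has_real_derivative r * w powr r / w + a * (r - 1) * w powr r / w^2) (at w)"
    "((\<lambda>w. r * w powr r / w + a * (r - 1) * w powr r / w^2) has_real_derivative
        r * (r - 1) * w powr r / w^2 + a * (r - 1) * (r - 2) * w powr r / w^3) (at w)"
proof -
  have wn: "w \<noteq> 0" "w^2 \<noteq> 0" "w * w \<noteq> 0" "w^2 * w^2 \<noteq> 0" using w by auto
  show "((\<lambda>w. w powr r + a * w powr r / w) has_real_derivative r * w powr r / w + a * (r - 1) * w powr r / w^2) (at w)"
    apply (rule DERIV_cong)
     apply (rule DERIV_add DERIV_cmult DERIV_divide dpowr DERIV_ident dsq DERIV_const w wn)+
    using w apply (simp add: field_simps power2_eq_square)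
    done
  show "((\<lambda>w. r * w powr r / w + a * (r - 1) * w powr r / w^2) has_real_derivative
        r * (r - 1) * w powr r / w^2 + a * (r - 1) * (r - 2) * w powr r / w^3) (at w)"
    apply (rule DERIV_cong)
     apply (rule DERIV_add DERIV_cmult DERIV_divide dpowr DERIV_ident dsq DERIV_const w wn)+
    using w apply (simp add: field_simps power2_eq_square power3_eq_cube)
    done
qed

lemma PhiC_d:
  assumes w: "w > 0"
  shows "((\<lambda>w. w powr r * exp (- b / w)) has_real_derivative exp (- b / w) * w powr r * (r / w + b / w^2)) (at w)"
    "((\<lambda>w. exp (- b / w) * w powr r * (r / w + b / w^2)) has_real_derivative
        exp (- b / w) * w powr r * (r * (r - 1) / w^2 + 2 * b * (r - 1) / w^3 + b^2 / w^4)) (at w)"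
proof -
  have wn: "w \<noteq> 0" "w^2 \<noteq> 0" "w * w \<noteq> 0" "w^2 * w^2 \<noteq> 0" using w by auto
  have de: "((\<lambda>w. exp (- b / w)) has_real_derivative exp (- b / w) * (b / w^2)) (at w)"
    apply (rule DERIV_cong)
     apply (rule DERIV_chain2[OF DERIV_exp] DERIV_divide DERIV_const DERIV_ident wn)+
    using w apply (simp add: field_simps power2_eq_square)
    done
  show "((\<lambda>w. w powr r * exp (- b / w)) has_real_derivative exp (- b / w) * w powr r * (r / w + b / w^2)) (at w)"
    apply (rule DERIV_cong)
     apply (rule DERIV_mult dpowr w de)+
    using w apply (simp add: field_simps power2_eq_square)
    done
  show "((\<lambda>w. exp (- b / w) * w powr r * (r / w + b / w^2)) has_real_derivative
        exp (- b / w) * w powr r * (r * (r - 1) / w^2 + 2 * b * (r - 1) / w^3 + b^2 / w^4)) (at w)"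
    apply (rule DERIV_cong)
     apply (rule DERIV_mult DERIV_add DERIV_divide DERIV_const DERIV_ident dsq dpowr w de wn)+
    using w apply (simp add: field_simps power2_eq_square power3_eq_cube power4_eq_xxxx)
    done
qed


lemma Wt_w: "Wt \<gamma> v = \<gamma> * (\<gamma> + 1) / (1 + v^2)" by (simp add: Wt_def)

lemma condA_alg:
  fixes w P g :: real
  assumes w: "w \<noteq> 0"
  shows "g * (g + 1) / w * P - (2 * (((g + 1) / 2) * P / w) + 4 * (w - 1) * (((g + 1) / 2) * (((g + 1) / 2) - 1) * P / w^2))
         = (g^2 - 1) * P / w^2"
  using w by (simp add: field_simps power2_eq_square)

lemma condB_alg:
  fixes w P g a :: real
  assumes w: "w \<noteq> 0" and a: "a * (2 * (2 * g - 1)) = 1 - g^2"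
  shows "g * (g + 1) / w * (P + a * P / w) - (2 * (((g + 1) / 2) * P / w + a * (((g + 1) / 2) - 1) * P / w^2)
      + 4 * (w - 1) * (((g + 1) / 2) * (((g + 1) / 2) - 1) * P / w^2 + a * (((g + 1) / 2) - 1) * (((g + 1) / 2) - 2) * P / w^3))
         = a * (g - 1) * (g - 3) * P / w^3"
proof -
  have "g * (g + 1) / w * (P + a * P / w) - (2 * (((g + 1) / 2) * P / w + a * (((g + 1) / 2) - 1) * P / w^2)
      + 4 * (w - 1) * (((g + 1) / 2) * (((g + 1) / 2) - 1) * P / w^2 + a * (((g + 1) / 2) - 1) * (((g + 1) / 2) - 2) * P / w^3))
      - a * (g - 1) * (g - 3) * P / w^3 = ((g^2 - 1) + a * (2 * (2 * g - 1))) * P / w^2"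
    using w by (simp add: field_simps power2_eq_square power3_eq_cube)
  then show ?thesis using a by simp
qed

lemma condC_alg:
  fixes w P g b e :: real
  assumes w: "w \<noteq> 0" and b: "2 * b = g^2 - 1"
  shows "g * (g + 1) / w * (P * e) - (2 * (e * P * (((g + 1) / 2) / w + b / w^2))
      + 4 * (w - 1) * (e * P * (((g + 1) / 2) * (((g + 1) / 2) - 1) / w^2 + 2 * b * (((g + 1) / 2) - 1) / w^3 + b^2 / w^4)))
         = - 4 * b * (w - 1) * ((g - 1) * w + b) * e * P / w^4"
proof -
  have "g * (g + 1) / w * (P * e) - (2 * (e * P * (((g + 1) / 2) / w + b / w^2))
      + 4 * (w - 1) * (e * P * (((g + 1) / 2) * (((g + 1) / 2) - 1) / w^2 + 2 * b * (((g + 1) / 2) - 1) / w^3 + b^2 / w^4)))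
      - (- 4 * b * (w - 1) * ((g - 1) * w + b) * e * P / w^4) = ((g^2 - 1) - 2 * b) * e * P / w^2"
    using w by (simp add: field_simps power2_eq_square power3_eq_cube power4_eq_xxxx)
  then show ?thesis using b by simp
qed


lemma wron_Phi:
  assumes dpsi: "\<And>x. (psz has_real_derivative psd x) (at x)"
    and dpsi1: "\<And>x. (psd has_real_derivative Wt \<gamma> x * psz x) (at x)"
    and ppos: "\<And>x. psz x > 0" and p10: "psd 0 = 0"
    and d1: "\<And>w. w > 0 \<Longrightarrow> (Phi has_real_derivative Phd w) (at w)"
    and d2: "\<And>w. w > 0 \<Longrightarrow> (Phd has_real_derivative Phdd w) (at w)"
    and Ppos: "\<And>w. w \<ge> 1 \<Longrightarrow> Phi w > 0"
    and cond: "\<And>x. x \<ge> 0 \<Longrightarrow> s * (Wt \<gamma> x * Phi (1 + x^2) - (2 * Phd (1 + x^2) + 4 * x^2 * Phdd (1 + x^2))) \<ge> 0"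
    and v: "v \<ge> 0"
  shows "s * (psz v / Phi (1 + v^2)) \<ge> s * (psz 0 / Phi 1)"
proof -
  have "s * (psz v / (\<lambda>v. Phi (1 + v^2)) v) \<ge> s * (psz 0 / (\<lambda>v. Phi (1 + v^2)) 0)"
  proof (rule wron_gen[where phd = "\<lambda>v. 2 * v * Phd (1 + v^2)" and phdd = "\<lambda>v. 2 * Phd (1 + v^2) + 4 * v^2 * Phdd (1 + v^2)", OF dpsi dpsi1 _ p10])
    show "\<And>x. 0 \<le> x \<Longrightarrow> 0 \<le> psz x" using ppos less_imp_le by blast
    show "\<And>x. ((\<lambda>v. Phi (1 + v^2)) has_real_derivative 2 * x * Phd (1 + x^2)) (at x)"
      by (rule phi_of_Phi(1)[OF d1 d2])
    show "\<And>x. ((\<lambda>v. 2 * v * Phd (1 + v^2)) has_real_derivative 2 * Phd (1 + x^2) + 4 * x^2 * Phdd (1 + x^2)) (at x)"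
      by (rule phi_of_Phi(2)[OF d1 d2])
    show "\<And>x. 0 \<le> x \<Longrightarrow> 0 < Phi (1 + x^2)" by (rule Ppos) simp
    show "2 * 0 * Phd (1 + 0^2) = 0" by simp
    show "\<And>x. 0 \<le> x \<Longrightarrow> 0 \<le> s * (Wt \<gamma> x * Phi (1 + x^2) - (2 * Phd (1 + x^2) + 4 * x^2 * Phdd (1 + x^2)))"
      by (rule cond)
    show "0 \<le> v" by (rule v)
  qed
  then show ?thesis by simp
qed

lemma psi_bounds:
  assumes g: "\<gamma> > 1/2"
    and dpsi: "\<And>x. (psz has_real_derivative psd x) (at x)"
    and dpsi1: "\<And>x. (psd has_real_derivative Wt \<gamma> x * psz x) (at x)"
    and ppos: "\<And>x. psz x > 0" and p0: "psz 0 = 1" and p10: "psd 0 = 0"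
  shows "\<exists>m M. m > 0 \<and> M > 0 \<and> (\<forall>v\<ge>0. m * (1 + v^2) powr ((\<gamma> + 1) / 2) \<le> psz v \<and>
            psz v \<le> M * (1 + v^2) powr ((\<gamma> + 1) / 2))"
proof -
  note W = wron_Phi[OF dpsi dpsi1 ppos p10]
  have A: "s * (psz v / (1 + v^2) powr ((\<gamma> + 1) / 2)) \<ge> s * 1"
    if v: "v \<ge> 0" and s: "s * (\<gamma>^2 - 1) \<ge> 0" for v s
  proof -
    have "s * (psz v / (\<lambda>w. w powr ((\<gamma> + 1) / 2)) (1 + v^2)) \<ge> s * (psz 0 / (\<lambda>w. w powr ((\<gamma> + 1) / 2)) 1)"
    proof (rule W[where Phd = "\<lambda>w. ((\<gamma> + 1) / 2) * w powr ((\<gamma> + 1) / 2) / w"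
          and Phdd = "\<lambda>w. ((\<gamma> + 1) / 2) * (((\<gamma> + 1) / 2) - 1) * w powr ((\<gamma> + 1) / 2) / w^2"])
      show "\<And>w. 0 < w \<Longrightarrow> ((\<lambda>w. w powr ((\<gamma> + 1) / 2)) has_real_derivative (\<gamma> + 1) / 2 * w powr ((\<gamma> + 1) / 2) / w) (at w)"
        by (rule PhiA_d(1))
      show "\<And>w. 0 < w \<Longrightarrow> ((\<lambda>w. (\<gamma> + 1) / 2 * w powr ((\<gamma> + 1) / 2) / w) has_real_derivative
          (\<gamma> + 1) / 2 * ((\<gamma> + 1) / 2 - 1) * w powr ((\<gamma> + 1) / 2) / w^2) (at w)"
        by (rule PhiA_d(2))
      show "\<And>w. 1 \<le> w \<Longrightarrow> 0 < w powr ((\<gamma> + 1) / 2)" by simp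
      fix x :: real assume x: "0 \<le> x"
      have "Wt \<gamma> x * (1 + x^2) powr ((\<gamma> + 1) / 2) - (2 * ((\<gamma> + 1) / 2 * (1 + x^2) powr ((\<gamma> + 1) / 2) / (1 + x^2))
          + 4 * x^2 * ((\<gamma> + 1) / 2 * ((\<gamma> + 1) / 2 - 1) * (1 + x^2) powr ((\<gamma> + 1) / 2) / (1 + x^2)^2))
          = (\<gamma>^2 - 1) * (1 + x^2) powr ((\<gamma> + 1) / 2) / (1 + x^2)^2"
        using condA_alg[OF onepx2_ne[of x], of \<gamma> "(1 + x^2) powr ((\<gamma> + 1) / 2)"] by (simp add: Wt_def)
      then show "0 \<le> s * (Wt \<gamma> x * (1 + x^2) powr ((\<gamma> + 1) / 2) - (2 * ((\<gamma> + 1) / 2 * (1 + x^2) powr ((\<gamma> + 1) / 2) / (1 + x^2))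
          + 4 * x^2 * ((\<gamma> + 1) / 2 * ((\<gamma> + 1) / 2 - 1) * (1 + x^2) powr ((\<gamma> + 1) / 2) / (1 + x^2)^2)))"
        using s by (simp add: mult.assoc[symmetric])
    qed (use v in auto)
    then show ?thesis using p0 by simp
  qed
  have B: "psz v / ((1 + v^2) powr ((\<gamma> + 1) / 2) + a * (1 + v^2) powr ((\<gamma> + 1) / 2) / (1 + v^2)) \<ge> 1 / (1 + a)"
    if v: "v \<ge> 0" and a: "a * (2 * (2 * \<gamma> - 1)) = 1 - \<gamma>^2" and a0: "a \<ge> 0" and gl: "\<gamma> \<le> 1" for v a
  proof -
    have "1 * (psz v / (\<lambda>w. w powr ((\<gamma> + 1) / 2) + a * w powr ((\<gamma> + 1) / 2) / w) (1 + v^2)) \<ge>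
          1 * (psz 0 / (\<lambda>w. w powr ((\<gamma> + 1) / 2) + a * w powr ((\<gamma> + 1) / 2) / w) 1)"
    proof (rule W[where Phd = "\<lambda>w. ((\<gamma> + 1) / 2) * w powr ((\<gamma> + 1) / 2) / w + a * (((\<gamma> + 1) / 2) - 1) * w powr ((\<gamma> + 1) / 2) / w^2"
          and Phdd = "\<lambda>w. ((\<gamma> + 1) / 2) * (((\<gamma> + 1) / 2) - 1) * w powr ((\<gamma> + 1) / 2) / w^2 + a * (((\<gamma> + 1) / 2) - 1) * (((\<gamma> + 1) / 2) - 2) * w powr ((\<gamma> + 1) / 2) / w^3"])
      show "\<And>w. 0 < w \<Longrightarrow> ((\<lambda>w. w powr ((\<gamma> + 1) / 2) + a * w powr ((\<gamma> + 1) / 2) / w) has_real_derivative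
          (\<gamma> + 1) / 2 * w powr ((\<gamma> + 1) / 2) / w + a * ((\<gamma> + 1) / 2 - 1) * w powr ((\<gamma> + 1) / 2) / w^2) (at w)"
        by (rule PhiB_d(1))
      show "\<And>w. 0 < w \<Longrightarrow> ((\<lambda>w. (\<gamma> + 1) / 2 * w powr ((\<gamma> + 1) / 2) / w + a * ((\<gamma> + 1) / 2 - 1) * w powr ((\<gamma> + 1) / 2) / w^2) has_real_derivative
          (\<gamma> + 1) / 2 * ((\<gamma> + 1) / 2 - 1) * w powr ((\<gamma> + 1) / 2) / w^2 + a * ((\<gamma> + 1) / 2 - 1) * ((\<gamma> + 1) / 2 - 2) * w powr ((\<gamma> + 1) / 2) / w^3) (at w)"
        by (rule PhiB_d(2))
      show "\<And>w. 1 \<le> w \<Longrightarrow> 0 < w powr ((\<gamma> + 1) / 2) + a * w powr ((\<gamma> + 1) / 2) / w"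
        using a0 by (intro add_pos_nonneg) auto
      fix x :: real assume x: "0 \<le> x"
      have e: "Wt \<gamma> x * ((1 + x^2) powr ((\<gamma> + 1) / 2) + a * (1 + x^2) powr ((\<gamma> + 1) / 2) / (1 + x^2))
          - (2 * ((\<gamma> + 1) / 2 * (1 + x^2) powr ((\<gamma> + 1) / 2) / (1 + x^2) + a * ((\<gamma> + 1) / 2 - 1) * (1 + x^2) powr ((\<gamma> + 1) / 2) / (1 + x^2)^2)
          + 4 * x^2 * ((\<gamma> + 1) / 2 * ((\<gamma> + 1) / 2 - 1) * (1 + x^2) powr ((\<gamma> + 1) / 2) / (1 + x^2)^2 + a * ((\<gamma> + 1) / 2 - 1) * ((\<gamma> + 1) / 2 - 2) * (1 + x^2) powr ((\<gamma> + 1) / 2) / (1 + x^2)^3))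
          = a * (\<gamma> - 1) * (\<gamma> - 3) * (1 + x^2) powr ((\<gamma> + 1) / 2) / (1 + x^2)^3"
        using condB_alg[OF onepx2_ne[of x] a, of "(1 + x^2) powr ((\<gamma> + 1) / 2)"] by (simp add: Wt_def)
      have "(\<gamma> - 1) * (\<gamma> - 3) \<ge> 0" by (rule mult_nonpos_nonpos) (use gl in auto)
      from mult_nonneg_nonneg[OF a0 this] have "a * (\<gamma> - 1) * (\<gamma> - 3) \<ge> 0" by (simp only: mult.assoc)
      then have "a * (\<gamma> - 1) * (\<gamma> - 3) * (1 + x^2) powr ((\<gamma> + 1) / 2) / (1 + x^2)^3 \<ge> 0" by simp
      then show "0 \<le> 1 * (Wt \<gamma> x * ((1 + x^2) powr ((\<gamma> + 1) / 2) + a * (1 + x^2) powr ((\<gamma> + 1) / 2) / (1 + x^2))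
          - (2 * ((\<gamma> + 1) / 2 * (1 + x^2) powr ((\<gamma> + 1) / 2) / (1 + x^2) + a * ((\<gamma> + 1) / 2 - 1) * (1 + x^2) powr ((\<gamma> + 1) / 2) / (1 + x^2)^2)
          + 4 * x^2 * ((\<gamma> + 1) / 2 * ((\<gamma> + 1) / 2 - 1) * (1 + x^2) powr ((\<gamma> + 1) / 2) / (1 + x^2)^2 + a * ((\<gamma> + 1) / 2 - 1) * ((\<gamma> + 1) / 2 - 2) * (1 + x^2) powr ((\<gamma> + 1) / 2) / (1 + x^2)^3)))"
        by (simp only: e mult_1)
    qed (use v in auto)
    then show ?thesis using p0 by simp
  qed
  have C: "psz v / ((1 + v^2) powr ((\<gamma> + 1) / 2) * exp (- b / (1 + v^2))) \<le> 1 / exp (- b)"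
    if v: "v \<ge> 0" and b: "2 * b = \<gamma>^2 - 1" and gl: "\<gamma> \<ge> 1" for v b
  proof -
    have "1 \<le> \<gamma>^2" using gl by (simp add: one_le_power)
    then have b0: "b \<ge> 0" using b by linarith
    have "(-1) * (psz v / (\<lambda>w. w powr ((\<gamma> + 1) / 2) * exp (- b / w)) (1 + v^2)) \<ge>
          (-1) * (psz 0 / (\<lambda>w. w powr ((\<gamma> + 1) / 2) * exp (- b / w)) 1)"
    proof (rule W[where Phd = "\<lambda>w. exp (- b / w) * w powr ((\<gamma> + 1) / 2) * (((\<gamma> + 1) / 2) / w + b / w^2)"
          and Phdd = "\<lambda>w. exp (- b / w) * w powr ((\<gamma> + 1) / 2) * (((\<gamma> + 1) / 2) * (((\<gamma> + 1) / 2) - 1) / w^2 + 2 * b * (((\<gamma> + 1) / 2) - 1) / w^3 + b^2 / w^4)"])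
      show "\<And>w. 0 < w \<Longrightarrow> ((\<lambda>w. w powr ((\<gamma> + 1) / 2) * exp (- b / w)) has_real_derivative
          exp (- b / w) * w powr ((\<gamma> + 1) / 2) * (((\<gamma> + 1) / 2) / w + b / w^2)) (at w)"
        by (rule PhiC_d(1))
      show "\<And>w. 0 < w \<Longrightarrow> ((\<lambda>w. exp (- b / w) * w powr ((\<gamma> + 1) / 2) * (((\<gamma> + 1) / 2) / w + b / w^2)) has_real_derivative
          exp (- b / w) * w powr ((\<gamma> + 1) / 2) * (((\<gamma> + 1) / 2) * (((\<gamma> + 1) / 2) - 1) / w^2 + 2 * b * (((\<gamma> + 1) / 2) - 1) / w^3 + b^2 / w^4)) (at w)"
        by (rule PhiC_d(2))
      show "\<And>w. 1 \<le> w \<Longrightarrow> 0 < w powr ((\<gamma> + 1) / 2) * exp (- b / w)" by simp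
      fix x :: real assume x: "0 \<le> x"
      have e: "Wt \<gamma> x * ((1 + x^2) powr ((\<gamma> + 1) / 2) * exp (- b / (1 + x^2)))
          - (2 * (exp (- b / (1 + x^2)) * (1 + x^2) powr ((\<gamma> + 1) / 2) * (((\<gamma> + 1) / 2) / (1 + x^2) + b / (1 + x^2)^2))
          + 4 * x^2 * (exp (- b / (1 + x^2)) * (1 + x^2) powr ((\<gamma> + 1) / 2) * (((\<gamma> + 1) / 2) * (((\<gamma> + 1) / 2) - 1) / (1 + x^2)^2 + 2 * b * (((\<gamma> + 1) / 2) - 1) / (1 + x^2)^3 + b^2 / (1 + x^2)^4)))
          = - 4 * b * x^2 * ((\<gamma> - 1) * (1 + x^2) + b) * exp (- b / (1 + x^2)) * (1 + x^2) powr ((\<gamma> + 1) / 2) / (1 + x^2)^4"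
        using condC_alg[OF onepx2_ne[of x] b, of "(1 + x^2) powr ((\<gamma> + 1) / 2)" "exp (- b / (1 + x^2))"] by (simp add: Wt_def)
      have "4 * b * x^2 * ((\<gamma> - 1) * (1 + x^2) + b) \<ge> 0"
        using b0 gl by (intro mult_nonneg_nonneg add_nonneg_nonneg) auto
      then have "4 * b * x^2 * ((\<gamma> - 1) * (1 + x^2) + b) * exp (- b / (1 + x^2)) * (1 + x^2) powr ((\<gamma> + 1) / 2) / (1 + x^2)^4 \<ge> 0"
        by simp
      then show "0 \<le> (-1) * (Wt \<gamma> x * ((1 + x^2) powr ((\<gamma> + 1) / 2) * exp (- b / (1 + x^2)))
          - (2 * (exp (- b / (1 + x^2)) * (1 + x^2) powr ((\<gamma> + 1) / 2) * (((\<gamma> + 1) / 2) / (1 + x^2) + b / (1 + x^2)^2))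
          + 4 * x^2 * (exp (- b / (1 + x^2)) * (1 + x^2) powr ((\<gamma> + 1) / 2) * (((\<gamma> + 1) / 2) * (((\<gamma> + 1) / 2) - 1) / (1 + x^2)^2 + 2 * b * (((\<gamma> + 1) / 2) - 1) / (1 + x^2)^3 + b^2 / (1 + x^2)^4))))"
        by (simp only: e)
    qed (use v in auto)
    note th = this
    have e1: "psz 0 / (1 powr ((\<gamma> + 1) / 2) * exp (- b / 1)) = 1 / exp (- b)" using p0 by simp
    show ?thesis using th unfolding e1 by linarith
  qed
  show ?thesis
  proof (cases "\<gamma> \<ge> 1")
    case True
    define b where "b = (\<gamma>^2 - 1) / 2"
    have b2: "2 * b = \<gamma>^2 - 1" by (simp add: b_def)
    have "1 \<le> \<gamma>^2" using True by (simp add: one_le_power)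
    then have b0: "b \<ge> 0" using b2 by linarith
    show ?thesis
    proof (intro exI conjI allI impI)
      fix v :: real assume v: "v \<ge> 0"
      define P where "P = (1 + v^2) powr ((\<gamma> + 1) / 2)"
      have P0: "P > 0" by (simp add: P_def onepx2_ne)
      have "1 * (psz v / P) \<ge> 1 * 1" unfolding P_def
        by (rule A[OF v]) (use \<open>1 \<le> \<gamma>^2\<close> in simp)
      then show "1 * P \<le> psz v" using P0 by (simp add: divide_simps)
      have c: "psz v / (P * exp (- b / (1 + v^2))) \<le> 1 / exp (- b)" unfolding P_def by (rule C[OF v b2 True])
      have e0: "exp (- b / (1 + v^2)) > 0" by simp
      have e1: "exp (- b / (1 + v^2)) \<le> 1" using b0 onepx2_pos[of v] by (simp add: divide_nonneg_pos)
      from c have "psz v \<le> (P * exp (- b / (1 + v^2))) * exp b"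
        using P0 e0 by (simp add: divide_simps exp_minus mult.commute)
      also have "\<dots> \<le> P * exp b" using e1 P0 by (simp add: mult_left_le)
      finally show "psz v \<le> exp b * P" by (simp add: mult.commute)
    qed auto
  next
    case False
    then have gl: "\<gamma> \<le> 1" by simp
    define a where "a = (1 - \<gamma>^2) / (2 * (2 * \<gamma> - 1))"
    have gg: "2 * (2 * \<gamma> - 1) > 0" using g by simp
    have a2: "a * (2 * (2 * \<gamma> - 1)) = 1 - \<gamma>^2" using gg by (simp add: a_def)
    have "\<gamma>^2 \<le> 1" using gl g by (simp add: power_le_one)
    then have a0: "a \<ge> 0" unfolding a_def using gg by (simp add: divide_nonneg_pos)
    show ?thesis
    proof (rule exI[of _ "1 / (1 + a)"], rule exI[of _ 1], intro conjI allI impI)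
      show "1 / (1 + a) > 0" using a0 by simp
      fix v :: real assume v: "v \<ge> 0"
      define P where "P = (1 + v^2) powr ((\<gamma> + 1) / 2)"
      have P0: "P > 0" by (simp add: P_def onepx2_ne)
      have "(-1) * (psz v / P) \<ge> (-1) * 1" unfolding P_def
        by (rule A[OF v]) (use \<open>\<gamma>^2 \<le> 1\<close> in simp)
      then show "psz v \<le> 1 * P" using P0 by (simp add: divide_simps)
      have c: "psz v / (P + a * P / (1 + v^2)) \<ge> 1 / (1 + a)" unfolding P_def by (rule B[OF v a2 a0 gl])
      have q: "P + a * P / (1 + v^2) \<ge> P" using a0 P0 onepx2_pos[of v] by simp
      have q0: "P + a * P / (1 + v^2) > 0" using q P0 by linarith
      have "P / (1 + a) \<le> (P + a * P / (1 + v^2)) / (1 + a)" using q a0 by (simp add: divide_right_mono)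
      also have "\<dots> \<le> psz v" using c q0 a0 by (simp add: divide_simps mult.commute)
      finally show "1 / (1 + a) * P \<le> psz v" by simp
    qed simp
  qed
qed


lemma cmp2:
  fixes F F' G G' :: "real \<Rightarrow> real"
  assumes ab: "a \<le> b"
    and dF: "\<And>x. a \<le> x \<Longrightarrow> x \<le> b \<Longrightarrow> (F has_real_derivative F' x) (at x)"
    and dG: "\<And>x. a \<le> x \<Longrightarrow> x \<le> b \<Longrightarrow> (G has_real_derivative G' x) (at x)"
    and bd: "\<And>x. a \<le> x \<Longrightarrow> x \<le> b \<Longrightarrow> \<bar>F' x\<bar> \<le> G' x"
  shows "\<bar>F b - F a\<bar> \<le> G b - G a"
proof -
  have 1: "(\<lambda>t. G t - F t) a \<le> (\<lambda>t. G t - F t) b"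
  proof (rule incr_lemma[OF ab, where F="\<lambda>t. G t - F t" and F'="\<lambda>t. G' t - F' t"])
    fix x assume x: "a \<le> x" "x \<le> b"
    show "((\<lambda>t. G t - F t) has_real_derivative G' x - F' x) (at x)" by (intro DERIV_diff dG dF x)
    show "G' x - F' x \<ge> 0" using bd[OF x] by simp
  qed
  have 2: "(\<lambda>t. G t + F t) a \<le> (\<lambda>t. G t + F t) b"
  proof (rule incr_lemma[OF ab, where F="\<lambda>t. G t + F t" and F'="\<lambda>t. G' t + F' t"])
    fix x assume x: "a \<le> x" "x \<le> b"
    show "((\<lambda>t. G t + F t) has_real_derivative G' x + F' x) (at x)" by (intro DERIV_add dG dF x)
    show "G' x + F' x \<ge> 0" using bd[OF x] by simp
  qed
  show ?thesis using 1 2 by simp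
qed

lemma exp_m1_le: "(y::real) \<ge> 0 \<Longrightarrow> exp y - 1 \<le> y * exp y"
proof -
  assume y: "y \<ge> 0"
  have "1 - y \<le> exp (- y)" using exp_ge_add_one_self[of "-y"] by simp
  then have "(1 - y) * exp y \<le> exp (- y) * exp y" by (rule mult_right_mono) simp
  then show ?thesis by (simp add: exp_minus algebra_simps)
qed

lemma powr_A_bound:
  fixes x r :: real
  assumes x: "0 \<le> x" "x \<le> 1" and r: "r > 0"
  shows "1 \<le> (1 + x) powr r" "(1 + x) powr r \<le> 1 + r * exp r * x"
proof -
  show "1 \<le> (1 + x) powr r" using x r by (simp add: ge_one_powr_ge_zero)
  have "(1 + x) powr r = exp (r * ln (1 + x))" using x by (simp add: powr_def)
  also have "\<dots> \<le> exp (r * x)" using x r by (simp add: ln_add_one_self_le_self)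
  also have "\<dots> \<le> 1 + r * x * exp (r * x)" using exp_m1_le[of "r * x"] x r by simp
  also have "\<dots> \<le> 1 + r * x * exp r"
    using x r by (intro add_left_mono mult_left_mono) (auto simp: mult_left_le)
  finally show "(1 + x) powr r \<le> 1 + r * exp r * x" by (simp add: algebra_simps)
qed


lemma asym:
  assumes g: "\<gamma> > 1/2"
    and dpsi: "\<And>x. (psz has_real_derivative psd x) (at x)"
    and dpsi1: "\<And>x. (psd has_real_derivative Wt \<gamma> x * psz x) (at x)"
    and ppos: "\<And>x. psz x > 0" and p0: "psz 0 = 1" and p10: "psd 0 = 0"
  shows "\<exists>c>0. \<exists>C. \<forall>v\<ge>1. \<bar>psz v / (c * v powr (\<gamma> + 1)) - 1\<bar> \<le> C / v^2"
proof -
  obtain m M where m0: "m > 0" and M0: "M > 0"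
    and mM: "\<And>v. v \<ge> 0 \<Longrightarrow> m * (1 + v^2) powr ((\<gamma> + 1) / 2) \<le> psz v \<and> psz v \<le> M * (1 + v^2) powr ((\<gamma> + 1) / 2)"
    using psi_bounds[OF g dpsi dpsi1 ppos p0 p10] by blast
  define r where "r = (\<gamma> + 1) / 2"
  have r0: "r > 0" using g by (simp add: r_def)
  define w where "w = (\<lambda>v::real. 1 + v^2)"
  define P where "P = (\<lambda>v. w v powr r)"
  define Q where "Q = (\<lambda>v. w v powr (\<gamma> + 1))"
  define G where "G = (\<lambda>v. w v powr (\<gamma> - 1/2))"
  define S where "S = (\<lambda>v. sqrt (w v))"
  have w1: "w v \<ge> 1" for v by (simp add: w_def)
  have w0: "w v > 0" for v using w1[of v] by linarith
  have P0: "P v > 0" for v using w0[of v] by (simp add: P_def)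
  have Q0: "Q v > 0" for v using w0[of v] by (simp add: Q_def)
  have G1: "G v \<ge> 1" for v using w1[of v] g by (simp add: G_def ge_one_powr_ge_zero)
  have S0: "S v > 0" for v using w0[of v] by (simp add: S_def)
  have PQ: "P v * P v = Q v" for v
    using w0[of v] by (simp add: P_def Q_def r_def powr_add[symmetric])
  have QG: "Q v = G v * w v * S v" for v
  proof -
    have "G v * w v * S v = w v powr (\<gamma> - 1/2) * w v powr 1 * w v powr (1/2)"
      using w0[of v] by (simp add: G_def S_def powr_half_sqrt)
    also have "\<dots> = w v powr ((\<gamma> - 1/2) + 1 + 1/2)" by (simp only: powr_add)
    also have "\<dots> = w v powr (\<gamma> + 1)" by (simp add: add.commute)
    finally show ?thesis by (simp add: Q_def)
  qed
  have SS: "S v * S v = w v" for v using w0[of v] by (simp add: S_def)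
  have S2: "S v \<le> 2 * v" if "v \<ge> 1" for v
  proof -
    have vv: "1 \<le> v * v" using mult_mono[of 1 v 1 v] that by simp
    have "w v \<le> (2 * v)^2" using vv by (simp add: w_def power2_eq_square)
    then have "S v \<le> sqrt ((2 * v)^2)" unfolding S_def by (rule real_sqrt_le_mono)
    moreover have "sqrt ((2 * v)^2) = 2 * v" using that by (intro real_sqrt_unique) auto
    ultimately show ?thesis by simp
  qed
  define phd where "phd = (\<lambda>v. 2 * v * (r * w v powr r / w v))"
  define phdd where "phdd = (\<lambda>v. 2 * (r * w v powr r / w v) + 4 * v^2 * (r * (r - 1) * w v powr r / (w v)^2))"
  have dP: "(P has_real_derivative phd v) (at v)" for v
    using phi_of_Phi(1)[OF PhiA_d(1) PhiA_d(2), of r v] by (simp add: P_def phd_def w_def)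
  have dphd: "(phd has_real_derivative phdd v) (at v)" for v
    using phi_of_Phi(2)[OF PhiA_d(1) PhiA_d(2), of r v] by (simp add: phdd_def phd_def w_def)
  have cA: "Wt \<gamma> v * P v - phdd v = (\<gamma>^2 - 1) * P v / (w v)^2" for v
    using condA_alg[OF onepx2_ne[of v], of \<gamma> "(1 + v^2) powr ((\<gamma> + 1) / 2)"]
    by (simp add: Wt_def P_def phdd_def w_def r_def)
  define Wr where "Wr = (\<lambda>v. psd v * P v - psz v * phd v)"
  have dWr: "(Wr has_real_derivative psz v * ((\<gamma>^2 - 1) * P v) / (w v)^2) (at v)" for v
  proof -
    have "(Wr has_real_derivative (Wt \<gamma> v * psz v * P v + phd v * psd v) - (psd v * phd v + phdd v * psz v)) (at v)"
      unfolding Wr_def by (intro DERIV_diff DERIV_mult dpsi dpsi1 dP dphd)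
    moreover have "(Wt \<gamma> v * psz v * P v + phd v * psd v) - (psd v * phd v + phdd v * psz v) = psz v * (Wt \<gamma> v * P v - phdd v)"
      by (simp add: algebra_simps)
    ultimately show ?thesis using cA[of v] by simp
  qed
  define f where "f = (\<lambda>v. psz v / P v)"
  have df: "(f has_real_derivative Wr v / Q v) (at v)" for v
  proof -
    have "(f has_real_derivative (psd v * P v - psz v * phd v) / (P v * P v)) (at v)"
      unfolding f_def by (rule DERIV_divide[OF dpsi dP]) (use P0[of v] in simp)
    then show ?thesis by (simp add: Wr_def PQ)
  qed
  define G' where "G' = (\<lambda>v. (\<gamma> - 1/2) * G v / w v * (2 * v))"
  have dG: "(G has_real_derivative G' v) (at v)" for v
  proof -
    have "((\<lambda>v. (\<lambda>x. x powr (\<gamma> - 1/2)) (1 + v^2)) has_real_derivative (\<gamma> - 1/2) * (1 + v^2) powr (\<gamma> - 1/2) / (1 + v^2) * (2 * v)) (at v)"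
    proof -
      have gd: "((\<lambda>v::real. 1 + v^2) has_real_derivative 2 * v) (at v)" by (auto intro!: derivative_eq_intros)
      show ?thesis using DERIV_chain2[OF dpowr[OF onepx2_pos[of v]] gd] by simp
    qed
    then show ?thesis by (simp add: G_def G'_def w_def)
  qed
  define K1 where "K1 = 2 * \<bar>\<gamma>^2 - 1\<bar> * M / (2 * \<gamma> - 1)"
  have g2: "2 * \<gamma> - 1 > 0" using g by simp
  have K10: "K1 \<ge> 0" using M0 g2 by (simp add: K1_def)
  have stepa: "\<bar>psz v * ((\<gamma>^2 - 1) * P v) / (w v)^2\<bar> \<le> K1 * G' v" if v: "v \<ge> 1" for v
  proof -
    have e1: "\<bar>psz v * ((\<gamma>^2 - 1) * P v) / (w v)^2\<bar> = \<bar>\<gamma>^2 - 1\<bar> * (psz v * P v) / (w v)^2"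
      using ppos[of v] P0[of v] by (simp add: abs_mult)
    have "psz v \<le> M * P v" using mM[of v] v by (simp add: P_def w_def r_def)
    then have e2: "psz v * P v \<le> M * Q v"
      using P0[of v] by (simp add: PQ[symmetric] mult.assoc[symmetric] mult_right_mono)
    have e3: "K1 * G' v = \<bar>\<gamma>^2 - 1\<bar> * M * G v * (2 * v) / w v"
    proof -
      have "w v \<noteq> 0" using w0[of v] by simp
      then show ?thesis using g2 by (simp add: K1_def G'_def field_simps)
    qed
    have e4: "M * Q v / (w v)^2 = M * G v * S v / w v"
      using w0[of v] by (simp add: QG field_simps power2_eq_square)
    have "\<bar>\<gamma>^2 - 1\<bar> * (psz v * P v) / (w v)^2 \<le> \<bar>\<gamma>^2 - 1\<bar> * (M * Q v) / (w v)^2"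
      using e2 by (intro divide_right_mono mult_left_mono) auto
    also have "\<dots> = \<bar>\<gamma>^2 - 1\<bar> * (M * Q v / (w v)^2)" by simp
    also have "\<dots> = \<bar>\<gamma>^2 - 1\<bar> * (M * G v * S v / w v)" by (simp only: e4)
    also have "\<dots> = \<bar>\<gamma>^2 - 1\<bar> * M * G v * S v / w v" by simp
    also have "\<dots> \<le> \<bar>\<gamma>^2 - 1\<bar> * M * G v * (2 * v) / w v"
      using S2[OF v] M0 G1[of v] w0[of v]
      by (intro divide_right_mono mult_left_mono) auto
    finally have fin: "\<bar>\<gamma>^2 - 1\<bar> * (psz v * P v) / (w v)^2 \<le> \<bar>\<gamma>^2 - 1\<bar> * M * G v * (2 * v) / w v" .
    show ?thesis unfolding e1 e3 by (rule fin)
  qed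
  define K where "K = \<bar>Wr 1\<bar> + K1"
  have K0: "K \<ge> 0" using K10 by (simp add: K_def)
  have stepc: "\<bar>Wr v\<bar> \<le> K * G v" if v: "v \<ge> 1" for v
  proof -
    have "\<bar>Wr v - Wr 1\<bar> \<le> K1 * G v - K1 * G 1"
      apply (rule cmp2[OF v, where F' = "\<lambda>v. psz v * ((\<gamma>^2 - 1) * P v) / (w v)^2" and G' = "\<lambda>v. K1 * G' v"])
      subgoal by (rule dWr)
      subgoal by (rule DERIV_cmult[OF dG])
      subgoal for x by (rule stepa)
      done
    then have "\<bar>Wr v\<bar> \<le> \<bar>Wr 1\<bar> + K1 * G v" using K10 G1[of 1] by (smt (verit) mult_nonneg_nonneg)
    also have "\<dots> \<le> \<bar>Wr 1\<bar> * G v + K1 * G v" using G1[of v] by (simp add: mult_le_cancel_left1)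
    finally show ?thesis by (simp add: K_def algebra_simps)
  qed
  have stepd: "\<bar>Wr v / Q v\<bar> \<le> 2 * K * v / (w v)^2" if v: "v \<ge> 1" for v
  proof -
    have "\<bar>Wr v / Q v\<bar> \<le> K * G v / Q v" using stepc[OF v] Q0[of v] by (simp add: divide_right_mono)
    also have "\<dots> = K / (w v * S v)" using G1[of v] w0[of v] S0[of v] by (simp add: QG)
    also have "\<dots> \<le> 2 * K * v / (w v)^2"
    proof -
      have "w v \<le> 2 * v * S v" using S2[OF v] S0[of v] SS[of v] by (metis mult_right_mono less_imp_le)
      then show ?thesis using K0 w0[of v] S0[of v] v
        by (simp add: divide_simps power2_eq_square) (metis mult_left_mono mult.assoc mult.commute)
    qed
    finally show ?thesis .
  qed
  have dK: "((\<lambda>u. K / w u) has_real_derivative - (2 * K * u) / (w u)^2) (at u)" for u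
  proof -
    have gd: "((\<lambda>v::real. 1 + v^2) has_real_derivative 2 * v) (at v)" for v by (auto intro!: derivative_eq_intros)
    have "((\<lambda>u. K / w u) has_real_derivative (0 * w u - K * (2 * u)) / (w u * w u)) (at u)"
      unfolding w_def by (rule DERIV_divide[OF DERIV_const gd]) (use onepx2_ne in simp)
    then show ?thesis by (simp add: power2_eq_square mult.assoc mult.left_commute)
  qed
  define G1 where "G1 = (\<lambda>u. f u + K / w u)"
  define G2 where "G2 = (\<lambda>u. f u - K / w u)"
  have G1m: "G1 b \<le> G1 a" if "1 \<le> a" "a \<le> b" for a b
  proof (rule decr_lemma[OF that(2), where F = G1 and F' = "\<lambda>u. Wr u / Q u + - (2 * K * u) / (w u)^2"])
    fix x assume x: "a \<le> x" "x \<le> b"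
    show "(G1 has_real_derivative Wr x / Q x + - (2 * K * x) / (w x)^2) (at x)"
      unfolding G1_def by (rule DERIV_add[OF df dK])
    have x1: "x \<ge> 1" using x that by linarith
    have h: "Wr x / Q x \<le> 2 * K * x / (w x)^2" using abs_le_D1[OF stepd[OF x1]] .
    have eq: "- (2 * K * x) / (w x)^2 = - (2 * K * x / (w x)^2)" by (rule minus_divide_left[symmetric])
    show "Wr x / Q x + - (2 * K * x) / (w x)^2 \<le> 0" using h eq by linarith
  qed
  have G2m: "G2 a \<le> G2 b" if "1 \<le> a" "a \<le> b" for a b
  proof (rule incr_lemma[OF that(2), where F = G2 and F' = "\<lambda>u. Wr u / Q u - - (2 * K * u) / (w u)^2"])
    fix x assume x: "a \<le> x" "x \<le> b"
    show "(G2 has_real_derivative Wr x / Q x - - (2 * K * x) / (w x)^2) (at x)"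
      unfolding G2_def by (rule DERIV_diff[OF df dK])
    have x1: "x \<ge> 1" using x that by linarith
    have h: "- (Wr x / Q x) \<le> 2 * K * x / (w x)^2" using abs_le_D2[OF stepd[OF x1]] .
    have eq: "- (2 * K * x) / (w x)^2 = - (2 * K * x / (w x)^2)" by (rule minus_divide_left[symmetric])
    show "Wr x / Q x - - (2 * K * x) / (w x)^2 \<ge> 0" using h eq by linarith
  qed
  have G21: "G2 u \<le> G1 u" for u using K0 w0[of u] by (simp add: G1_def G2_def)
  define c where "c = Inf (G1 ` {1..})"
  have bdd: "bdd_below (G1 ` {1..})"
  proof (rule bdd_belowI[of _ "G2 1"])
    fix y assume "y \<in> G1 ` {1..}"
    then obtain v where v: "v \<ge> 1" "y = G1 v" by auto
    show "G2 1 \<le> y" using G2m[of 1 v] G21[of v] v by simp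
  qed
  have cup: "c \<le> G1 u" if "u \<ge> 1" for u
    unfolding c_def by (rule cInf_lower[OF _ bdd]) (use that in auto)
  have clow: "G2 u \<le> c" if u: "u \<ge> 1" for u
    unfolding c_def
  proof (rule cInf_greatest)
    show "G1 ` {1..} \<noteq> {}" by auto
    fix y assume "y \<in> G1 ` {1..}"
    then obtain v where v: "v \<ge> 1" "y = G1 v" by auto
    show "G2 u \<le> y"
    proof (cases "v \<ge> u")
      case True
      then show ?thesis using G2m[OF u True] G21[of v] v by simp
    next
      case False
      then show ?thesis using G1m[OF v(1), of u] G21[of u] v by simp
    qed
  qed
  have fc: "\<bar>f u - c\<bar> \<le> K / w u" if "u \<ge> 1" for u
    using cup[OF that] clow[OF that] by (simp add: G1_def G2_def abs_le_iff)
  have fm: "m \<le> f u \<and> f u \<le> M" if "u \<ge> 0" for u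
  proof -
    have "m * P u \<le> psz u \<and> psz u \<le> M * P u" using mM[OF that] by (simp add: P_def w_def r_def)
    then show ?thesis using P0[of u] by (simp add: f_def divide_simps)
  qed
  have c0: "c > 0"
  proof -
    define u where "u = max 1 (2 * K / m)"
    have u1: "u \<ge> 1" by (simp add: u_def)
    have "u * 1 \<le> u * u" by (rule mult_left_mono) (use u1 in auto)
    then have uw: "u \<le> w u" unfolding w_def power2_eq_square by linarith
    have "K / w u \<le> K / u" by (rule divide_left_mono[OF uw K0]) (use u1 w0[of u] in simp)
    also have "\<dots> \<le> m / 2"
    proof -
      have "2 * K / m \<le> u" by (simp add: u_def)
      then have h: "2 * K \<le> u * m" using m0 by (simp add: pos_divide_le_eq)
      have "K / u \<le> m / 2 \<longleftrightarrow> K \<le> m / 2 * u" using u1 by (intro pos_divide_le_eq) simp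
      then show ?thesis using h by (simp add: algebra_simps)
    qed
    finally have a: "K / w u \<le> m / 2" .
    have b: "G2 u \<le> c" by (rule clow[OF u1])
    have d: "m \<le> f u" using fm[of u] u1 by simp
    show ?thesis using a b d m0 unfolding G2_def by linarith
  qed
  have fin: "\<bar>psz v / (c * v powr (\<gamma> + 1)) - 1\<bar> \<le> (M * r * exp r + K) / c / v^2" if v: "v \<ge> 1" for v
  proof -
    have v0: "v > 0" using v by simp
    define x where "x = 1 / v^2"
    have x0: "0 \<le> x" by (simp add: x_def)
    have "1 \<le> v^2" using v by (simp add: one_le_power)
    then have x1: "x \<le> 1" unfolding x_def by (simp add: divide_le_eq_1)
    have vp: "v powr (\<gamma> + 1) = (v^2) powr r"
    proof -
      have "(v^2) powr r = (v powr 2) powr r" using v0 by simp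
      also have "\<dots> = v powr (2 * r)" by (rule powr_powr)
      also have "2 * r = \<gamma> + 1" by (simp add: r_def)
      finally show ?thesis by simp
    qed
    define A where "A = (1 + x) powr r"
    have A1: "1 \<le> A" and A2: "A \<le> 1 + r * exp r * x"
      using powr_A_bound[OF x0 x1 r0] by (simp_all add: A_def)
    have PA: "P v / (v^2) powr r = A"
    proof -
      have "P v / (v^2) powr r = (w v / v^2) powr r" by (simp add: P_def powr_divide)
      moreover have "w v / v^2 = 1 + x" using v0 by (simp add: w_def x_def field_simps)
      ultimately show ?thesis by (simp add: A_def)
    qed
    have ps: "psz v = f v * P v" using P0[of v] by (simp add: f_def)
    have e: "psz v / (c * v powr (\<gamma> + 1)) - 1 = (f v * A - c) / c"
    proof -
      have "psz v / (c * v powr (\<gamma> + 1)) = f v * (P v / (v^2) powr r) / c"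
        unfolding vp ps by simp
      then show ?thesis using c0 by (simp add: PA field_simps)
    qed
    have fv: "m \<le> f v" "f v \<le> M" using fm[of v] v by auto
    have fcv: "\<bar>f v - c\<bar> \<le> K * x"
    proof -
      have "K / w v \<le> K / v^2" using K0 v0 onepx2_pos[of v] by (intro divide_left_mono) (auto simp: w_def)
      then show ?thesis using fc[OF v] by (simp add: x_def)
    qed
    have "\<bar>f v * A - c\<bar> \<le> f v * (A - 1) + \<bar>f v - c\<bar>"
    proof -
      have "f v * A - c = f v * (A - 1) + (f v - c)" by (simp add: algebra_simps)
      moreover have "f v * (A - 1) \<ge> 0" using fv m0 A1 by simp
      ultimately show ?thesis by linarith
    qed
    also have "\<dots> \<le> M * (r * exp r * x) + K * x"
      using fv A1 A2 fcv m0 by (intro add_mono mult_mono) auto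
    finally have h: "\<bar>f v * A - c\<bar> \<le> (M * r * exp r + K) * x" by (simp add: algebra_simps)
    have "\<bar>psz v / (c * v powr (\<gamma> + 1)) - 1\<bar> = \<bar>f v * A - c\<bar> / c" using c0 by (simp add: e)
    also have "\<dots> \<le> (M * r * exp r + K) * x / c" using h c0 by (simp add: divide_right_mono)
    also have "\<dots> = (M * r * exp r + K) / c / v^2" by (simp add: x_def)
    finally show "\<bar>psz v / (c * v powr (\<gamma> + 1)) - 1\<bar> \<le> (M * r * exp r + K) / c / v^2" .
  qed
  show ?thesis using c0 fin by blast
qed



lemma sol_of_smooth:
  assumes sm: "smooth_real psz" and L: "\<And>v. L0 \<gamma> psz v = 0"
  shows "\<exists>psd. (\<forall>x. (psz has_real_derivative psd x) (at x)) \<and>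
      (\<forall>x. (psd has_real_derivative Wt \<gamma> x * psz x) (at x)) \<and> deriv psz = psd"
proof -
  obtain D where D0: "D 0 = psz" and dD: "\<And>n x. (D n has_real_derivative D (Suc n) x) (at x)"
    using sm unfolding smooth_real_def by blast
  have d1: "deriv psz = D (Suc 0)" using dD[of 0] D0 by (auto simp: fun_eq_iff intro: DERIV_imp_deriv)
  have d2: "deriv (D (Suc 0)) = D (Suc (Suc 0))" using dD[of "Suc 0"] by (auto simp: fun_eq_iff intro: DERIV_imp_deriv)
  have e: "D (Suc (Suc 0)) x = Wt \<gamma> x * psz x" for x using L[of x] unfolding L0_def d1 d2 by simp
  show ?thesis
  proof (intro exI conjI allI)
    show "(psz has_real_derivative D (Suc 0) x) (at x)" for x using dD[of 0 x] D0 by simp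
    show "(D (Suc 0) has_real_derivative Wt \<gamma> x * psz x) (at x)" for x using dD[of "Suc 0" x] e[of x] by simp
    show "deriv psz = D (Suc 0)" by (rule d1)
  qed
qed

theorem lemma2p2:
  fixes \<gamma> :: real
  assumes "\<gamma> > 1/2"
  shows "(\<exists>!\<psi>. smooth_real \<psi> \<and> (\<forall>v. \<psi> v > 0) \<and> (\<forall>v. L0 \<gamma> \<psi> v = 0)
                \<and> \<psi> 0 = 1 \<and> deriv \<psi> 0 = 0)
       \<and> (\<forall>\<psi>. smooth_real \<psi> \<and> (\<forall>v. \<psi> v > 0) \<and> (\<forall>v. L0 \<gamma> \<psi> v = 0)
                \<and> \<psi> 0 = 1 \<and> deriv \<psi> 0 = 0 \<longrightarrow>
            (\<forall>v. \<psi> (-v) = \<psi> v \<and> \<psi> v > 0) \<and>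
            (\<exists>v0 > 0. \<exists>c > 0. \<exists>R :: real \<Rightarrow> real.
                (\<exists>B. \<forall>v\<ge>v0. \<bar>R v\<bar> \<le> B) \<and>
                R \<in> O[at_top](\<lambda>v. 1 / v^2) \<and>
                (\<forall>v. \<bar>v\<bar> \<ge> v0 \<longrightarrow> \<psi> v = c * \<bar>v\<bar> powr (\<gamma> + 1) * (1 + R \<bar>v\<bar>)) \<and>
                (\<forall>R' :: real \<Rightarrow> real.
                   (\<exists>B. \<forall>v\<ge>v0. \<bar>R' v\<bar> \<le> B) \<and>
                   R' \<in> O[at_top](\<lambda>v. 1 / v^2) \<and>
                   (\<forall>v. \<bar>v\<bar> \<ge> v0 \<longrightarrow> \<psi> v = c * \<bar>v\<bar> powr (\<gamma> + 1) * (1 + R' \<bar>v\<bar>))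
                   \<longrightarrow> (\<forall>v\<ge>v0. R' v = R v))))"
proof -
  have g0: "\<gamma> > 0" using assms by simp
  let ?P = "\<lambda>\<psi>. smooth_real \<psi> \<and> (\<forall>v. \<psi> v > 0) \<and> (\<forall>v. L0 \<gamma> \<psi> v = 0) \<and> \<psi> 0 = 1 \<and> deriv \<psi> 0 = 0"
  have ex: "?P (psi \<gamma>)"
  proof -
    have d1: "\<And>x. (psi \<gamma> has_real_derivative psi1 \<gamma> x) (at x)" using series_main(3)[OF g0] .
    have d2: "\<And>x. (psi1 \<gamma> has_real_derivative Wt \<gamma> x * psi \<gamma> x) (at x)" using series_main(4)[OF g0] .
    have e1: "deriv (psi \<gamma>) = psi1 \<gamma>" using d1 by (auto simp: fun_eq_iff intro: DERIV_imp_deriv)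
    have e2: "deriv (psi1 \<gamma>) x = Wt \<gamma> x * psi \<gamma> x" for x using d2 by (rule DERIV_imp_deriv)
    show ?thesis
    proof (intro conjI allI)
      show "smooth_real (psi \<gamma>)" by (rule smooth_sol[OF d1 d2])
      show "psi \<gamma> v > 0" for v using psi_ge1[OF g0, of v] by simp
      show "L0 \<gamma> (psi \<gamma>) v = 0" for v by (simp add: L0_def e1 e2)
      show "psi \<gamma> 0 = 1" by (rule psi_0[OF g0])
      show "deriv (psi \<gamma>) 0 = 0" by (simp add: e1 psi1_0)
    qed
  qed
  have uniq: "\<psi>a = \<psi>b" if a: "?P \<psi>a" and b: "?P \<psi>b" for \<psi>a \<psi>b
  proof -
    obtain pa where pa: "\<And>x. (\<psi>a has_real_derivative pa x) (at x)" "\<And>x. (pa has_real_derivative Wt \<gamma> x * \<psi>a x) (at x)" "deriv \<psi>a = pa"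
      using sol_of_smooth[of \<psi>a \<gamma>] a by blast
    obtain pb where pb: "\<And>x. (\<psi>b has_real_derivative pb x) (at x)" "\<And>x. (pb has_real_derivative Wt \<gamma> x * \<psi>b x) (at x)" "deriv \<psi>b = pb"
      using sol_of_smooth[of \<psi>b \<gamma>] b by blast
    have "(\<lambda>x. \<psi>a x - \<psi>b x) x = 0" for x
    proof (rule energy_zero[OF g0, where d = "\<lambda>x. \<psi>a x - \<psi>b x" and dq = "\<lambda>x. pa x - pb x"])
      show "((\<lambda>x. \<psi>a x - \<psi>b x) has_real_derivative pa x - pb x) (at x)" for x by (intro DERIV_diff pa pb)
      show "((\<lambda>x. pa x - pb x) has_real_derivative Wt \<gamma> x * (\<psi>a x - \<psi>b x)) (at x)" for x
        using DERIV_diff[OF pa(2) pb(2), of x] by (simp add: algebra_simps)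
      show "\<psi>a 0 - \<psi>b 0 = 0" using a b by simp
      show "pa 0 - pb 0 = 0" using a b pa(3) pb(3) by simp
    qed
    then show ?thesis by (simp add: fun_eq_iff)
  qed
  have part1: "\<exists>!\<psi>. ?P \<psi>" using ex uniq by blast
  have part2: "(\<forall>v. \<psi> (-v) = \<psi> v \<and> \<psi> v > 0) \<and>
            (\<exists>v0 > 0. \<exists>c > 0. \<exists>R :: real \<Rightarrow> real.
                (\<exists>B. \<forall>v\<ge>v0. \<bar>R v\<bar> \<le> B) \<and>
                R \<in> O[at_top](\<lambda>v. 1 / v^2) \<and>
                (\<forall>v. \<bar>v\<bar> \<ge> v0 \<longrightarrow> \<psi> v = c * \<bar>v\<bar> powr (\<gamma> + 1) * (1 + R \<bar>v\<bar>)) \<and>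
                (\<forall>R' :: real \<Rightarrow> real.
                   (\<exists>B. \<forall>v\<ge>v0. \<bar>R' v\<bar> \<le> B) \<and>
                   R' \<in> O[at_top](\<lambda>v. 1 / v^2) \<and>
                   (\<forall>v. \<bar>v\<bar> \<ge> v0 \<longrightarrow> \<psi> v = c * \<bar>v\<bar> powr (\<gamma> + 1) * (1 + R' \<bar>v\<bar>))
                   \<longrightarrow> (\<forall>v\<ge>v0. R' v = R v)))" if P: "?P \<psi>" for \<psi>
  proof -
    obtain p1 where p1: "\<And>x. (\<psi> has_real_derivative p1 x) (at x)" "\<And>x. (p1 has_real_derivative Wt \<gamma> x * \<psi> x) (at x)" "deriv \<psi> = p1"
      using sol_of_smooth[of \<psi> \<gamma>] P by blast
    have pos: "\<And>x. \<psi> x > 0" and i0: "\<psi> 0 = 1" and i1: "p1 0 = 0" using P p1(3) by auto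
    have even: "\<psi> (-v) = \<psi> v" for v
    proof -
      have "(\<lambda>x. \<psi> x - \<psi> (-x)) v = 0"
      proof (rule energy_zero[OF g0, where d = "\<lambda>x. \<psi> x - \<psi> (-x)" and dq = "\<lambda>x. p1 x + p1 (-x)"])
        fix x
        have m: "((\<lambda>x. - x) has_real_derivative -1) (at x)" by (auto intro!: derivative_eq_intros)
        show "((\<lambda>x. \<psi> x - \<psi> (-x)) has_real_derivative p1 x + p1 (-x)) (at x)"
          using DERIV_diff[OF p1(1) DERIV_chain2[OF p1(1) m]] by simp
        have "((\<lambda>x. p1 x + p1 (-x)) has_real_derivative Wt \<gamma> x * \<psi> x + Wt \<gamma> (-x) * \<psi> (-x) * -1) (at x)"
          by (intro DERIV_add p1(2) DERIV_chain2[OF p1(2) m])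
        then show "((\<lambda>x. p1 x + p1 (-x)) has_real_derivative Wt \<gamma> x * (\<psi> x - \<psi> (-x))) (at x)"
          by (simp add: Wt_even algebra_simps)
      qed (use i1 in auto)
      then show ?thesis by simp
    qed
    obtain c C where c0: "c > 0" and cC: "\<And>v. v \<ge> 1 \<Longrightarrow> \<bar>\<psi> v / (c * v powr (\<gamma> + 1)) - 1\<bar> \<le> C / v^2"
      using asym[OF assms p1(1) p1(2) pos i0 i1] by blast
    define R where "R = (\<lambda>v. \<psi> v / (c * v powr (\<gamma> + 1)) - 1)"
    have Rb: "\<bar>R v\<bar> \<le> \<bar>C\<bar>" if "v \<ge> 1" for v
    proof -
      have "C / v^2 \<le> \<bar>C\<bar> / v^2" by (simp add: divide_right_mono)
      also have "\<dots> \<le> \<bar>C\<bar> / 1" using that by (intro divide_left_mono) (auto simp: one_le_power)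
      finally show ?thesis using cC[OF that] by (simp add: R_def)
    qed
    have RO: "R \<in> O[at_top](\<lambda>v. 1 / v^2)"
    proof (rule bigoI[where c = "\<bar>C\<bar>"])
      show "\<forall>\<^sub>F x in at_top. norm (R x) \<le> \<bar>C\<bar> * norm (1 / x^2)"
        unfolding eventually_at_top_linorder
      proof (intro exI[of _ 1] allI impI)
        fix v :: real assume v: "v \<ge> 1"
        have "C / v^2 \<le> \<bar>C\<bar> / v^2" by (simp add: divide_right_mono)
        then show "norm (R v) \<le> \<bar>C\<bar> * norm (1 / v^2)" using cC[OF v] by (simp add: R_def)
      qed
    qed
    have cp: "c * v powr (\<gamma> + 1) > 0" if "v \<ge> 1" for v using c0 that by simp
    have rep: "\<psi> v = c * \<bar>v\<bar> powr (\<gamma> + 1) * (1 + R \<bar>v\<bar>)" if "\<bar>v\<bar> \<ge> 1" for v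
    proof -
      have "\<psi> v = \<psi> \<bar>v\<bar>" using even[of v] by (cases "v \<ge> 0") auto
      also have "\<dots> = c * \<bar>v\<bar> powr (\<gamma> + 1) * (1 + R \<bar>v\<bar>)"
      proof -
        have "v \<noteq> 0" using that by auto
        then show ?thesis using c0 by (simp add: R_def)
      qed
      finally show ?thesis .
    qed
    show ?thesis
    proof (rule conjI)
      show "\<forall>v. \<psi> (-v) = \<psi> v \<and> \<psi> v > 0" using even pos by auto
    next
    show "\<exists>v0 > 0. \<exists>c > 0. \<exists>R :: real \<Rightarrow> real.
                (\<exists>B. \<forall>v\<ge>v0. \<bar>R v\<bar> \<le> B) \<and>
                R \<in> O[at_top](\<lambda>v. 1 / v^2) \<and>
                (\<forall>v. \<bar>v\<bar> \<ge> v0 \<longrightarrow> \<psi> v = c * \<bar>v\<bar> powr (\<gamma> + 1) * (1 + R \<bar>v\<bar>)) \<and>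
                (\<forall>R' :: real \<Rightarrow> real.
                   (\<exists>B. \<forall>v\<ge>v0. \<bar>R' v\<bar> \<le> B) \<and>
                   R' \<in> O[at_top](\<lambda>v. 1 / v^2) \<and>
                   (\<forall>v. \<bar>v\<bar> \<ge> v0 \<longrightarrow> \<psi> v = c * \<bar>v\<bar> powr (\<gamma> + 1) * (1 + R' \<bar>v\<bar>))
                   \<longrightarrow> (\<forall>v\<ge>v0. R' v = R v))"
    proof (rule exI[of _ 1], rule conjI, simp, rule exI[of _ c], rule conjI, rule c0, rule exI[of _ R], intro conjI)
      show "\<exists>B. \<forall>v\<ge>1. \<bar>R v\<bar> \<le> B" using Rb by blast
      show "R \<in> O[at_top](\<lambda>v. 1 / v^2)" by (rule RO)
      show "\<forall>v. 1 \<le> \<bar>v\<bar> \<longrightarrow> \<psi> v = c * \<bar>v\<bar> powr (\<gamma> + 1) * (1 + R \<bar>v\<bar>)" using rep by blast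
      show "\<forall>R'. (\<exists>B. \<forall>v\<ge>1. \<bar>R' v\<bar> \<le> B) \<and> R' \<in> O[at_top](\<lambda>v. 1 / v^2) \<and>
                  (\<forall>v. 1 \<le> \<bar>v\<bar> \<longrightarrow> \<psi> v = c * \<bar>v\<bar> powr (\<gamma> + 1) * (1 + R' \<bar>v\<bar>)) \<longrightarrow>
                  (\<forall>v\<ge>1. R' v = R v)"
      proof (intro allI impI)
      fix R' :: "real \<Rightarrow> real" and v :: real
      assume H: "(\<exists>B. \<forall>v\<ge>1. \<bar>R' v\<bar> \<le> B) \<and> R' \<in> O[at_top](\<lambda>v. 1 / v^2) \<and>
                  (\<forall>v. 1 \<le> \<bar>v\<bar> \<longrightarrow> \<psi> v = c * \<bar>v\<bar> powr (\<gamma> + 1) * (1 + R' \<bar>v\<bar>))"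
        and v: "1 \<le> v"
      have "\<psi> v = c * v powr (\<gamma> + 1) * (1 + R' v)" using H v by auto
      moreover have "\<psi> v = c * v powr (\<gamma> + 1) * (1 + R v)" using rep[of v] v by simp
      ultimately have "c * v powr (\<gamma> + 1) * (1 + R' v) = c * v powr (\<gamma> + 1) * (1 + R v)" by metis
      then show "R' v = R v" using cp[OF v] by (metis mult_left_cancel add_left_cancel less_irrefl)
    qed
    qed
    qed
  qed
  show ?thesis using part1 part2 by blast
qed

end
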